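(* Let $m,n,k\in\mathbb{N}$ and let $\mathrm{vec}:\mathbb{R}^{m\times n}\to\mathbb{R}^{mn}$ be column-major vectorization. Then for every $f\in ISD(\mathbb{R}^{mn},\mathbb{R}^k)$ there exists $\mathcal N\in MRNN(\mathbb{R}^{m\times n},\mathbb{R}^k)$ with $f=\mathcal N\circ\mathrm{vec}^{-1}$, and for every $\mathcal N\in MRNN(\mathbb{R}^{m\times n},\mathbb{R}^k)$ there exists $f\in ISD(\mathbb{R}^{mn},\mathbb{R}^k)$ with $\mathcal N=f\circ\mathrm{vec}$. Consequently $\mathcal N\mapsto \mathcal N\circ\mathrm{vec}^{-1}$ is a bijective ring homomorphism $MRNN(\mathbb{R}^{m\times n},\mathbb{R}^k)\to ISD(\mathbb{R}^{mn},\mathbb{R}^k)$ (pointwise operations).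
   Context: $ISD(\mathbb{R}^N,\mathbb{R}^k)$: maps whose components lie in the smallest set of functions $\mathbb{R}^N\to\mathbb{R}$ containing all real polynomials and closed under pointwise $\min$, $\max$. An $L$-layer matrix-recurrent neural network (MRNN) with input $X\in\mathbb{R}^{m\times n}$ computes $h_0=0\in\mathbb{R}^{d_0}$ and, for $\ell=1,\dots,L$, $h_\ell = b_{\ell,0} + A_{\ell,0}h_{\ell-1} + B_{\ell,0}(I\otimes X)h_{\ell-1} + \sigma\big(b_{\ell,1} + A_{\ell,1}h_{\ell-1} + B_{\ell,1}(I\otimes X)h_{\ell-1}\big)$, and outputs $h_L\in\mathbb{R}^k$; here $\sigma=\mathrm{ReLU}=\max(0,\cdot)$ componentwise, $I\otimes X$ is a Kronecker product with an identity matrix whose size may vary per layer (and per term) so that the products are defined, and $b_{\ell,i},A_{\ell,i},B_{\ell,i}$ are real vectors/matrices of compatible sizes (widths arbitrary). $MRNN(\mathbb{R}^{m\times n},\mathbb{R}^k)$ is the set of all functions computed by such networks for some $L\ge0$. *)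

theory Defs
  imports "Jordan_Normal_Form.Matrix" "HOL-Algebra.QuotRing"
begin

text \<open>Only their values on
  carrier_vec N matter.\<close>

inductive poly_fun :: "nat \<Rightarrow> (real vec \<Rightarrow> real) \<Rightarrow> bool" for N :: nat where
  pf_const: "poly_fun N (\<lambda>x. c)"
| pf_coord: "i < N \<Longrightarrow> poly_fun N (\<lambda>x. x $ i)"
| pf_add: "poly_fun N f \<Longrightarrow> poly_fun N g \<Longrightarrow> poly_fun N (\<lambda>x. f x + g x)"
| pf_mult: "poly_fun N f \<Longrightarrow> poly_fun N g \<Longrightarrow> poly_fun N (\<lambda>x. f x * g x)"

inductive isd_fun :: "nat \<Rightarrow> (real vec \<Rightarrow> real) \<Rightarrow> bool" for N :: nat where
  isd_poly: "poly_fun N f \<Longrightarrow> isd_fun N f"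
| isd_min: "isd_fun N f \<Longrightarrow> isd_fun N g \<Longrightarrow> isd_fun N (\<lambda>x. min (f x) (g x))"
| isd_max: "isd_fun N f \<Longrightarrow> isd_fun N g \<Longrightarrow> isd_fun N (\<lambda>x. max (f x) (g x))"

definition ISD :: "nat \<Rightarrow> nat \<Rightarrow> (real vec \<Rightarrow> real vec) set" where
  "ISD N k = {F. F \<in> extensional (carrier_vec N) \<and>
      (\<forall>x \<in> carrier_vec N. F x \<in> carrier_vec k) \<and>
      (\<forall>i < k. \<exists>f. isd_fun N f \<and> (\<forall>x \<in> carrier_vec N. F x $ i = f x))}"

text \<open>Kronecker product I_r \<otimes> X.\<close>

definition kron_id :: "nat \<Rightarrow> real mat \<Rightarrow> real mat" where
  "kron_id r X = mat (r * dim_row X) (r * dim_col X)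
     (\<lambda>(i, j). if i div dim_row X = j div dim_col X
               then X $$ (i mod dim_row X, j mod dim_col X) else 0)"

text \<open>One layer: (b0, A0, r0, B0, b1, A1, r1, B1), where r0, r1 are the sizes of the
  identity matrices in the Kronecker products of the two terms.\<close>

datatype layer = Layer
  (lb0: "real vec") (lA0: "real mat") (lr0: nat) (lB0: "real mat")
  (lb1: "real vec") (lA1: "real mat") (lr1: nat) (lB1: "real mat")

definition relu_vec :: "real vec \<Rightarrow> real vec" where
  "relu_vec v = map_vec (\<lambda>t. max 0 t) v"

definition layer_step :: "real mat \<Rightarrow> layer \<Rightarrow> real vec \<Rightarrow> real vec" where
  "layer_step X L h =
     lb0 L + lA0 L *\<^sub>v h + lB0 L *\<^sub>v (kron_id (lr0 L) X *\<^sub>v h)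
     + relu_vec (lb1 L + lA1 L *\<^sub>v h + lB1 L *\<^sub>v (kron_id (lr1 L) X *\<^sub>v h))"

text \<open>A Kronecker term whose product is not defined is allowed only
  with a zero coefficient matrix B (i.e. the term is absent).\<close>

definition layer_wf :: "nat \<Rightarrow> nat \<Rightarrow> nat \<Rightarrow> nat \<Rightarrow> layer \<Rightarrow> bool" where
  "layer_wf m n d d' L \<longleftrightarrow>
     lb0 L \<in> carrier_vec d' \<and> lA0 L \<in> carrier_mat d' d \<and>
     lB0 L \<in> carrier_mat d' (lr0 L * m) \<and> (lr0 L * n = d \<or> lB0 L = 0\<^sub>m d' (lr0 L * m)) \<and>
     lb1 L \<in> carrier_vec d' \<and> lA1 L \<in> carrier_mat d' d \<and>
     lB1 L \<in> carrier_mat d' (lr1 L * m) \<and> (lr1 L * n = d \<or> lB1 L = 0\<^sub>m d' (lr1 L * m))"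

definition net_wf :: "nat \<Rightarrow> nat \<Rightarrow> nat \<Rightarrow> nat list \<Rightarrow> layer list \<Rightarrow> bool" where
  "net_wf m n k ds Ls \<longleftrightarrow> length ds = Suc (length Ls) \<and> last ds = k \<and>
     (\<forall>l < length Ls. layer_wf m n (ds ! l) (ds ! Suc l) (Ls ! l))"

definition net_eval :: "nat list \<Rightarrow> layer list \<Rightarrow> real mat \<Rightarrow> real vec" where
  "net_eval ds Ls X = foldl (\<lambda>h L. layer_step X L h) (0\<^sub>v (hd ds)) Ls"

definition MRNN :: "nat \<Rightarrow> nat \<Rightarrow> nat \<Rightarrow> (real mat \<Rightarrow> real vec) set" where
  "MRNN m n k = {G. \<exists>ds Ls. net_wf m n k ds Ls \<and>
      G = restrict (net_eval ds Ls) (carrier_mat m n)}"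

definition vec_cm :: "nat \<Rightarrow> nat \<Rightarrow> real mat \<Rightarrow> real vec" where
  "vec_cm m n X = vec (m * n) (\<lambda>p. X $$ (p mod m, p div m))"

definition unvec_cm :: "nat \<Rightarrow> nat \<Rightarrow> real vec \<Rightarrow> real mat" where
  "unvec_cm m n v = mat m n (\<lambda>(i, j). v $ (j * m + i))"

definition fun_ring :: "'a set \<Rightarrow> nat \<Rightarrow> ('a \<Rightarrow> real vec) set \<Rightarrow> ('a \<Rightarrow> real vec) ring" where
  "fun_ring D k S = \<lparr>carrier = S,
     mult = (\<lambda>F G. restrict (\<lambda>x. vec k (\<lambda>i. F x $ i * G x $ i)) D),
     one = restrict (\<lambda>x. vec k (\<lambda>i. 1)) D,
     zero = restrict (\<lambda>x. vec k (\<lambda>i. 0)) D,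
     add = (\<lambda>F G. restrict (\<lambda>x. vec k (\<lambda>i. F x $ i + G x $ i)) D)\<rparr>"

definition MRNN_ring :: "nat \<Rightarrow> nat \<Rightarrow> nat \<Rightarrow> (real mat \<Rightarrow> real vec) ring" where
  "MRNN_ring m n k = fun_ring (carrier_mat m n) k (MRNN m n k)"

definition ISD_ring :: "nat \<Rightarrow> nat \<Rightarrow> (real vec \<Rightarrow> real vec) ring" where
  "ISD_ring N k = fun_ring (carrier_vec N) k (ISD N k)"

end

theory Submission
  imports Defs
begin


lemma real_min_trick:
  fixes a b p :: real
  shows "p * min a b = max (min (p*a) (p*a + (p^2+1)*(b-a))) (min (p*b) (p*b + (p^2+1)*(a-b)))"
proof -
  have qe: "p^2 + 1 - p = (p - 1/2)^2 + 3/4" by (simp add: power2_eq_square algebra_simps)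
  have q: "p^2 + 1 - p > 0" unfolding qe by (simp add: add_nonneg_pos)
  have q0: "p^2+1 > 0" by (simp add: add_nonneg_pos)
  show ?thesis
  proof (cases "a \<le> b")
    case True
    have 1: "(p^2+1)*(b-a) \<ge> 0" using True q0 by simp
    have 2: "(p^2+1 - p)*(b-a) \<ge> 0" using True q by simp
    have 3: "p*b + (p^2+1)*(a-b) \<le> p*a" using 2 by (simp add: algebra_simps)
    have 4: "min (p*a) (p*a + (p^2+1)*(b-a)) = p*a" using 1 by simp
    have 5: "min (p*b) (p*b + (p^2+1)*(a-b)) \<le> p*a" using 3 by linarith
    show ?thesis unfolding 4 using 5 True by (simp add: max_absorb1 min_absorb1)
  next
    case False
    have 1: "(p^2+1)*(a-b) \<ge> 0" using False q0 by simp
    have 2: "(p^2+1 - p)*(a-b) \<ge> 0" using False q by simp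
    have 3: "p*a + (p^2+1)*(b-a) \<le> p*b" using 2 by (simp add: algebra_simps)
    have 4: "min (p*b) (p*b + (p^2+1)*(a-b)) = p*b" using 1 by simp
    have 5: "min (p*a) (p*a + (p^2+1)*(b-a)) \<le> p*b" using 3 by linarith
    show ?thesis unfolding 4 using 5 False by (simp add: max_absorb2 min_absorb2)
  qed
qed



lemma isd_const: "isd_fun N (\<lambda>x. c)"
  by (intro isd_poly pf_const)

lemma isd_coord: "i < N \<Longrightarrow> isd_fun N (\<lambda>x. x $ i)"
  by (intro isd_poly pf_coord)

lemma poly_scale: "poly_fun N f \<Longrightarrow> poly_fun N (\<lambda>x. c * f x)"
  using pf_mult[OF pf_const] by blast

lemma isd_neg: "isd_fun N f \<Longrightarrow> isd_fun N (\<lambda>x. - f x)"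
proof (induction rule: isd_fun.induct)
  case (isd_poly f)
  then show ?case using poly_scale[OF isd_poly, of "-1"] isd_fun.isd_poly by simp
next
  case (isd_min f g)
  have "(\<lambda>x. - min (f x) (g x)) = (\<lambda>x. max (- f x) (- g x))" by auto
  then show ?case using isd_fun.isd_max[OF isd_min(3,4)] by simp
next
  case (isd_max f g)
  have "(\<lambda>x. - max (f x) (g x)) = (\<lambda>x. min (- f x) (- g x))" by auto
  then show ?case using isd_fun.isd_min[OF isd_max(3,4)] by simp
qed

lemma isd_add_poly: "isd_fun N g \<Longrightarrow> poly_fun N p \<Longrightarrow> isd_fun N (\<lambda>x. p x + g x)"
proof (induction rule: isd_fun.induct)
  case (isd_poly f)
  then show ?case by (intro isd_fun.isd_poly pf_add)
next
  case (isd_min f g)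
  have "(\<lambda>x. p x + min (f x) (g x)) = (\<lambda>x. min (p x + f x) (p x + g x))" by auto
  then show ?case using isd_fun.isd_min[OF isd_min(3)[OF isd_min(5)] isd_min(4)[OF isd_min(5)]] by simp
next
  case (isd_max f g)
  have "(\<lambda>x. p x + max (f x) (g x)) = (\<lambda>x. max (p x + f x) (p x + g x))" by auto
  then show ?case using isd_fun.isd_max[OF isd_max(3)[OF isd_max(5)] isd_max(4)[OF isd_max(5)]] by simp
qed

lemma isd_add: "isd_fun N f \<Longrightarrow> isd_fun N g \<Longrightarrow> isd_fun N (\<lambda>x. f x + g x)"
proof (induction arbitrary: g rule: isd_fun.induct)
  case (isd_poly f)
  then show ?case using isd_add_poly by blast
next
  case (isd_min f h)
  have "(\<lambda>x. min (f x) (h x) + g x) = (\<lambda>x. min (f x + g x) (h x + g x))" by auto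
  then show ?case using isd_fun.isd_min[OF isd_min(3)[OF isd_min(5)] isd_min(4)[OF isd_min(5)]] by simp
next
  case (isd_max f h)
  have "(\<lambda>x. max (f x) (h x) + g x) = (\<lambda>x. max (f x + g x) (h x + g x))" by auto
  then show ?case using isd_fun.isd_max[OF isd_max(3)[OF isd_max(5)] isd_max(4)[OF isd_max(5)]] by simp
qed

lemma isd_diff: "isd_fun N f \<Longrightarrow> isd_fun N g \<Longrightarrow> isd_fun N (\<lambda>x. f x - g x)"
proof -
  assume "isd_fun N f" "isd_fun N g"
  then have "isd_fun N (\<lambda>x. f x + - g x)" using isd_add isd_neg by blast
  moreover have "(\<lambda>x. f x + - g x) = (\<lambda>x. f x - g x)" by simp
  ultimately show ?thesis by simp
qed

lemma poly_min_step:
  assumes G: "\<And>p. poly_fun N p \<Longrightarrow> isd_fun N (\<lambda>x. p x * G x)"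
    and H: "\<And>p. poly_fun N p \<Longrightarrow> isd_fun N (\<lambda>x. p x * H x)"
    and p: "poly_fun N p"
  shows "isd_fun N (\<lambda>x. p x * min (G x) (H x))"
proof -
  let ?q = "\<lambda>x. (p x)^2 + 1"
  have q: "poly_fun N ?q" unfolding power2_eq_square by (intro pf_add pf_mult p pf_const)
  have pG: "isd_fun N (\<lambda>x. p x * G x)" and pH: "isd_fun N (\<lambda>x. p x * H x)"
    and qG: "isd_fun N (\<lambda>x. ?q x * G x)" and qH: "isd_fun N (\<lambda>x. ?q x * H x)"
    using G H p q by auto
  have P1: "isd_fun N (\<lambda>x. p x * G x + (?q x * H x - ?q x * G x))"
    by (intro isd_add isd_diff pG qG qH)
  have P2: "isd_fun N (\<lambda>x. p x * H x + (?q x * G x - ?q x * H x))"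
    by (intro isd_add isd_diff pH qG qH)
  have eq: "(\<lambda>x. p x * min (G x) (H x)) = (\<lambda>x. max (min (p x * G x) (p x * G x + (?q x * H x - ?q x * G x)))
       (min (p x * H x) (p x * H x + (?q x * G x - ?q x * H x))))"
    by (rule ext, subst real_min_trick, simp add: algebra_simps)
  show ?thesis unfolding eq by (intro isd_fun.isd_max isd_fun.isd_min pG pH P1 P2)
qed

lemma isd_poly_mult: "isd_fun N F \<Longrightarrow> poly_fun N p \<Longrightarrow> isd_fun N (\<lambda>x. p x * F x)"
proof (induction arbitrary: p rule: isd_fun.induct)
  case (isd_poly f)
  then show ?case by (intro isd_fun.isd_poly pf_mult)
next
  case (isd_min f g)
  then show ?case using poly_min_step by blast
next
  case (isd_max f g)
  have m: "isd_fun N (\<lambda>x. p x * min (f x) (g x))" using poly_min_step isd_max by blast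
  have eq: "(\<lambda>x. p x * max (f x) (g x)) = (\<lambda>x. (p x * f x + p x * g x) - p x * min (f x) (g x))"
    by (rule ext) (simp add: max_def min_def algebra_simps)
  show ?case unfolding eq by (intro isd_diff isd_add m isd_max)
qed

lemma isd_scale: "isd_fun N F \<Longrightarrow> isd_fun N (\<lambda>x. c * F x)"
  using isd_poly_mult[OF _ pf_const] by blast

lemma isd_mult: "isd_fun N F \<Longrightarrow> isd_fun N K \<Longrightarrow> isd_fun N (\<lambda>x. F x * K x)"
proof (induction arbitrary: K rule: isd_fun.induct)
  case (isd_poly f)
  then show ?case using isd_poly_mult by blast
next
  case (isd_min f g)
  let ?Kp = "\<lambda>x. max (K x) 0" and ?Kn = "\<lambda>x. max (- K x) 0"
  have Kp: "isd_fun N ?Kp" and Kn: "isd_fun N ?Kn"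
    using isd_min(5) isd_neg isd_const isd_fun.isd_max by blast+
  have eq: "(\<lambda>x. min (f x) (g x) * K x) = (\<lambda>x. min (f x * ?Kp x) (g x * ?Kp x) - min (f x * ?Kn x) (g x * ?Kn x))"
  proof
    fix x
    have "K x = ?Kp x - ?Kn x" by auto
    then have "min (f x) (g x) * K x = min (f x) (g x) * ?Kp x - min (f x) (g x) * ?Kn x"
      by (metis right_diff_distrib)
    also have "\<dots> = min (f x * ?Kp x) (g x * ?Kp x) - min (f x * ?Kn x) (g x * ?Kn x)"
      by (simp add: min_mult_distrib_right)
    finally show "min (f x) (g x) * K x = min (f x * ?Kp x) (g x * ?Kp x) - min (f x * ?Kn x) (g x * ?Kn x)" .
  qed
  show ?case unfolding eq
    by (rule isd_diff; rule isd_fun.isd_min) (simp_all add: isd_min.IH Kp Kn)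
next
  case (isd_max f g)
  let ?Kp = "\<lambda>x. max (K x) 0" and ?Kn = "\<lambda>x. max (- K x) 0"
  have Kp: "isd_fun N ?Kp" and Kn: "isd_fun N ?Kn"
    using isd_max(5) isd_neg isd_const isd_fun.isd_max by blast+
  have eq: "(\<lambda>x. max (f x) (g x) * K x) = (\<lambda>x. max (f x * ?Kp x) (g x * ?Kp x) - max (f x * ?Kn x) (g x * ?Kn x))"
  proof
    fix x
    have "K x = ?Kp x - ?Kn x" by auto
    then have "max (f x) (g x) * K x = max (f x) (g x) * ?Kp x - max (f x) (g x) * ?Kn x"
      by (metis right_diff_distrib)
    also have "\<dots> = max (f x * ?Kp x) (g x * ?Kp x) - max (f x * ?Kn x) (g x * ?Kn x)"
      by (simp add: max_mult_distrib_right)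
    finally show "max (f x) (g x) * K x = max (f x * ?Kp x) (g x * ?Kp x) - max (f x * ?Kn x) (g x * ?Kn x)" .
  qed
  show ?case unfolding eq
    by (rule isd_diff; rule isd_fun.isd_max) (simp_all add: isd_max.IH Kp Kn)
qed

lemma isd_sum: "finite A \<Longrightarrow> (\<And>j. j \<in> A \<Longrightarrow> isd_fun N (f j)) \<Longrightarrow> isd_fun N (\<lambda>x. \<Sum>j\<in>A. f j x)"
proof (induction rule: finite_induct)
  case empty
  then show ?case using isd_const[of N 0] by simp
next
  case (insert a A)
  then show ?case by (simp add: isd_add)
qed



lemma mv_index:
  assumes "A \<in> carrier_mat d' d" "dim_vec v = d" "i < d'"
  shows "(A *\<^sub>v v) $ i = (\<Sum>j<d. A $$ (i,j) * v $ j)"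
  using assms by (auto simp: scalar_prod_def atLeast0LessThan intro!: sum.cong)

lemma kron_id_carrier: "X \<in> carrier_mat m n \<Longrightarrow> kron_id r X \<in> carrier_mat (r*m) (r*n)"
  by (auto simp: kron_id_def)

lemma kron_id_index: "X \<in> carrier_mat m n \<Longrightarrow> i < r*m \<Longrightarrow> j < r*n \<Longrightarrow>
   kron_id r X $$ (i,j) = (if i div m = j div n then X $$ (i mod m, j mod n) else 0)"
  by (auto simp: kron_id_def)

lemma vec_cm_index: "a < m \<Longrightarrow> b < n \<Longrightarrow> vec_cm m n X $ (b*m + a) = X $$ (a, b)"
proof -
  assume a: "a < m" and b: "b < n"
  have "b*m + a < m*n"
  proof -
    have "b*m + a < b*m + m" using a by simp
    also have "\<dots> = (b+1)*m" by simp
    also have "\<dots> \<le> n*m" using b by (intro mult_right_mono) auto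
    finally show ?thesis by (simp add: mult.commute)
  qed
  then show ?thesis using a by (simp add: vec_cm_def)
qed

lemma idx_bound: "(a::nat) < m \<Longrightarrow> b < n \<Longrightarrow> b*m + a < m*n"
proof -
  assume a: "a < m" and b: "b < n"
  have "b*m + a < b*m + m" using a by simp
  also have "\<dots> = (b+1)*m" by simp
  also have "\<dots> \<le> n*m" using b by (intro mult_right_mono) auto
  finally show ?thesis by (simp add: mult.commute)
qed

definition PI :: "nat \<Rightarrow> nat \<Rightarrow> nat \<Rightarrow> (real mat \<Rightarrow> real vec) \<Rightarrow> bool" where
  "PI m n d H \<longleftrightarrow> (\<forall>X\<in>carrier_mat m n. H X \<in> carrier_vec d) \<and>
     (\<forall>i<d. \<exists>f. isd_fun (m*n) f \<and> (\<forall>X\<in>carrier_mat m n. H X $ i = f (vec_cm m n X)))"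

lemma PI_choose:
  assumes "PI m n d H"
  obtains fs where "\<And>i. i < d \<Longrightarrow> isd_fun (m*n) (fs i)"
    "\<And>i X. i < d \<Longrightarrow> X \<in> carrier_mat m n \<Longrightarrow> H X $ i = fs i (vec_cm m n X)"
proof -
  from assms have "\<forall>i. \<exists>f. i < d \<longrightarrow> isd_fun (m*n) f \<and> (\<forall>X\<in>carrier_mat m n. H X $ i = f (vec_cm m n X))"
    unfolding PI_def by auto
  from choice[OF this] obtain fs where "\<forall>i. i < d \<longrightarrow> isd_fun (m*n) (fs i) \<and> (\<forall>X\<in>carrier_mat m n. H X $ i = fs i (vec_cm m n X))"
    by blast
  then show ?thesis using that by blast
qed

lemma PI_ex: "PI m n d H \<Longrightarrow> \<exists>fs. (\<forall>i<d. isd_fun (m*n) (fs i)) \<and>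
   (\<forall>i<d. \<forall>X\<in>carrier_mat m n. H X $ i = fs i (vec_cm m n X))"
  by (rule PI_choose) blast+

lemma PI_dim: "PI m n d H \<Longrightarrow> X \<in> carrier_mat m n \<Longrightarrow> dim_vec (H X) = d"
  unfolding PI_def by auto

lemma PI_const: "c \<in> carrier_vec d \<Longrightarrow> PI m n d (\<lambda>X. c)"
  unfolding PI_def
proof (intro conjI ballI allI impI)
  fix i assume "i < d"
  show "\<exists>f. isd_fun (m * n) f \<and> (\<forall>X\<in>carrier_mat m n. c $ i = f (vec_cm m n X))"
    by (rule exI[of _ "\<lambda>x. c $ i"]) (simp add: isd_const)
qed auto

lemma PI_add: "PI m n d H1 \<Longrightarrow> PI m n d H2 \<Longrightarrow> PI m n d (\<lambda>X. H1 X + H2 X)"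
proof -
  assume h1: "PI m n d H1" and h2: "PI m n d H2"
  obtain f1 where f1: "\<And>i. i < d \<Longrightarrow> isd_fun (m*n) (f1 i)"
    "\<And>i X. i < d \<Longrightarrow> X \<in> carrier_mat m n \<Longrightarrow> H1 X $ i = f1 i (vec_cm m n X)"
    using PI_ex[OF h1] by auto
  obtain f2 where f2: "\<And>i. i < d \<Longrightarrow> isd_fun (m*n) (f2 i)"
    "\<And>i X. i < d \<Longrightarrow> X \<in> carrier_mat m n \<Longrightarrow> H2 X $ i = f2 i (vec_cm m n X)"
    using PI_ex[OF h2] by auto
  show ?thesis unfolding PI_def
  proof (intro conjI ballI allI impI)
    fix X :: "real mat" assume "X \<in> carrier_mat m n"
    then show "H1 X + H2 X \<in> carrier_vec d" using PI_dim[OF h2] by (intro carrier_vecI) simp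
  next
    fix i assume i: "i < d"
    show "\<exists>f. isd_fun (m * n) f \<and> (\<forall>X\<in>carrier_mat m n. (H1 X + H2 X) $ i = f (vec_cm m n X))"
    proof (intro exI[of _ "\<lambda>x. f1 i x + f2 i x"] conjI ballI)
      show "isd_fun (m * n) (\<lambda>x. f1 i x + f2 i x)" using f1(1)[OF i] f2(1)[OF i] by (rule isd_add)
    next
      fix X :: "real mat" assume X: "X \<in> carrier_mat m n"
      show "(H1 X + H2 X) $ i = f1 i (vec_cm m n X) + f2 i (vec_cm m n X)"
        using PI_dim[OF h2 X] i f1(2)[OF i X] f2(2)[OF i X] by simp
    qed
  qed
qed

lemma PI_relu: "PI m n d H \<Longrightarrow> PI m n d (\<lambda>X. relu_vec (H X))"
proof -
  assume h: "PI m n d H"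
  obtain f where f: "\<And>i. i < d \<Longrightarrow> isd_fun (m*n) (f i)"
    "\<And>i X. i < d \<Longrightarrow> X \<in> carrier_mat m n \<Longrightarrow> H X $ i = f i (vec_cm m n X)"
    using PI_ex[OF h] by auto
  show ?thesis unfolding PI_def
  proof (intro conjI ballI allI impI)
    fix X :: "real mat" assume "X \<in> carrier_mat m n"
    then show "relu_vec (H X) \<in> carrier_vec d" using PI_dim[OF h] by (intro carrier_vecI) (simp add: relu_vec_def)
  next
    fix i assume i: "i < d"
    show "\<exists>g. isd_fun (m * n) g \<and> (\<forall>X\<in>carrier_mat m n. relu_vec (H X) $ i = g (vec_cm m n X))"
    proof (intro exI[of _ "\<lambda>x. max 0 (f i x)"] conjI ballI)
      show "isd_fun (m * n) (\<lambda>x. max 0 (f i x))" using isd_const f(1)[OF i] by (rule isd_fun.isd_max)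
    next
      fix X :: "real mat" assume X: "X \<in> carrier_mat m n"
      show "relu_vec (H X) $ i = max 0 (f i (vec_cm m n X))"
        using PI_dim[OF h X] i f(2)[OF i X] by (simp add: relu_vec_def)
    qed
  qed
qed

lemma PI_mv: "PI m n d H \<Longrightarrow> A \<in> carrier_mat d' d \<Longrightarrow> PI m n d' (\<lambda>X. A *\<^sub>v H X)"
proof -
  assume h: "PI m n d H" and A: "A \<in> carrier_mat d' d"
  obtain f where f: "\<And>i. i < d \<Longrightarrow> isd_fun (m*n) (f i)"
    "\<And>i X. i < d \<Longrightarrow> X \<in> carrier_mat m n \<Longrightarrow> H X $ i = f i (vec_cm m n X)"
    using PI_ex[OF h] by auto
  show ?thesis unfolding PI_def
  proof (intro conjI ballI allI impI)
    fix X :: "real mat" assume "X \<in> carrier_mat m n"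
    then show "A *\<^sub>v H X \<in> carrier_vec d'" using A by (intro carrier_vecI) simp
  next
    fix i assume i: "i < d'"
    show "\<exists>g. isd_fun (m * n) g \<and> (\<forall>X\<in>carrier_mat m n. (A *\<^sub>v H X) $ i = g (vec_cm m n X))"
    proof (intro exI[of _ "\<lambda>x. \<Sum>j<d. A $$ (i,j) * f j x"] conjI ballI)
      show "isd_fun (m * n) (\<lambda>x. \<Sum>j<d. A $$ (i, j) * f j x)"
        by (intro isd_sum isd_scale f) auto
    next
      fix X :: "real mat" assume X: "X \<in> carrier_mat m n"
      show "(A *\<^sub>v H X) $ i = (\<Sum>j<d. A $$ (i, j) * f j (vec_cm m n X))"
        using mv_index[OF A PI_dim[OF h X] i] f(2)[OF _ X] by simp
    qed
  qed
qed

lemma PI_kron: "PI m n d H \<Longrightarrow> r * n = d \<Longrightarrow> PI m n (r*m) (\<lambda>X. kron_id r X *\<^sub>v H X)"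
proof -
  assume h: "PI m n d H" and r: "r * n = d"
  obtain f where f: "\<And>i. i < d \<Longrightarrow> isd_fun (m*n) (f i)"
    "\<And>i X. i < d \<Longrightarrow> X \<in> carrier_mat m n \<Longrightarrow> H X $ i = f i (vec_cm m n X)"
    using PI_ex[OF h] by auto
  show ?thesis unfolding PI_def
  proof (intro conjI ballI allI impI)
    fix X :: "real mat" assume "X \<in> carrier_mat m n"
    then show "kron_id r X *\<^sub>v H X \<in> carrier_vec (r*m)" using kron_id_carrier[of X m n r]
      by (intro carrier_vecI) simp
  next
    fix p assume p: "p < r*m"
    let ?g = "\<lambda>x. \<Sum>j<d. (if p div m = j div n then x $ ((j mod n)*m + p mod m) else 0) * f j x"
    show "\<exists>g. isd_fun (m * n) g \<and> (\<forall>X\<in>carrier_mat m n. (kron_id r X *\<^sub>v H X) $ p = g (vec_cm m n X))"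
    proof (intro exI[of _ ?g] conjI ballI)
      show "isd_fun (m * n) ?g"
      proof (intro isd_sum)
        fix j assume j: "j \<in> {..<d}"
        have m0: "0 < m" using p by (cases "m = 0") auto
        have n0: "0 < n" using j r by (cases "n = 0") auto
        have b: "(j mod n)*m + p mod m < m*n" using m0 n0 by (intro idx_bound) auto
        show "isd_fun (m * n) (\<lambda>x. (if p div m = j div n then x $ ((j mod n)*m + p mod m) else 0) * f j x)"
        proof (cases "p div m = j div n")
          case True
          then show ?thesis using isd_poly_mult[OF f(1) pf_coord[OF b]] j by simp
        next
          case False
          then show ?thesis using isd_const[of "m*n" 0] by simp
        qed
      qed auto
    next
      fix X :: "real mat" assume X: "X \<in> carrier_mat m n"
      have K: "kron_id r X \<in> carrier_mat (r*m) d" using kron_id_carrier[OF X, of r] r by simp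
      have "(kron_id r X *\<^sub>v H X) $ p = (\<Sum>j<d. kron_id r X $$ (p,j) * H X $ j)"
        using mv_index[OF K PI_dim[OF h X] p] .
      also have "\<dots> = ?g (vec_cm m n X)"
      proof (intro sum.cong refl)
        fix j assume j: "j \<in> {..<d}"
        have m0: "0 < m" using p by (cases "m = 0") auto
        have n0: "0 < n" using j r by (cases "n = 0") auto
        show "kron_id r X $$ (p, j) * H X $ j =
          (if p div m = j div n then vec_cm m n X $ ((j mod n)*m + p mod m) else 0) * f j (vec_cm m n X)"
          using kron_id_index[OF X p, of j] j r f(2)[OF _ X, of j] vec_cm_index[of "p mod m" m "j mod n" n X] m0 n0
          by simp
      qed
      finally show "(kron_id r X *\<^sub>v H X) $ p = ?g (vec_cm m n X)" .
    qed
  qed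
qed

lemma PI_Bterm:
  assumes h: "PI m n d H" and B: "B \<in> carrier_mat d' (r*m)" and c: "r * n = d \<or> B = 0\<^sub>m d' (r*m)"
  shows "PI m n d' (\<lambda>X. B *\<^sub>v (kron_id r X *\<^sub>v H X))"
proof (cases "r * n = d")
  case True
  then show ?thesis using PI_mv[OF PI_kron[OF h True] B] by simp
next
  case False
  then have B0: "B = 0\<^sub>m d' (r*m)" using c by simp
  have "B *\<^sub>v (kron_id r X *\<^sub>v H X) = 0\<^sub>v d'" if X: "X \<in> carrier_mat m n" for X
    using kron_id_carrier[OF X, of r] B0 by (intro eq_vecI) (auto simp: scalar_prod_def)
  then show ?thesis using PI_const[of "0\<^sub>v d'" d' m n] unfolding PI_def by auto
qed

lemma PI_layer:
  assumes h: "PI m n d H" and L: "layer_wf m n d d' L"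
  shows "PI m n d' (\<lambda>X. layer_step X L (H X))"
  unfolding layer_step_def using L unfolding layer_wf_def
  by (intro PI_add PI_relu PI_const PI_mv[OF h] PI_Bterm[OF h]) auto

lemma PI_foldl:
  assumes "PI m n (hd ds) H" "length ds = Suc (length Ls)"
    "\<forall>l < length Ls. layer_wf m n (ds ! l) (ds ! Suc l) (Ls ! l)"
  shows "PI m n (last ds) (\<lambda>X. foldl (\<lambda>h L. layer_step X L h) (H X) Ls)"
  using assms
proof (induction Ls arbitrary: ds H)
  case Nil
  then show ?case by (cases ds) auto
next
  case (Cons L Ls)
  obtain d ds' where ds: "ds = d # ds'" using Cons(3) by (cases ds) auto
  have ds': "ds' \<noteq> []" using Cons(3) ds by auto
  have L: "layer_wf m n d (hd ds') L" using Cons(4) ds ds' by (cases ds') force+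
  have "PI m n (hd ds') (\<lambda>X. layer_step X L (H X))" using PI_layer[OF _ L] Cons(2) ds by simp
  moreover have "\<forall>l < length Ls. layer_wf m n (ds' ! l) (ds' ! Suc l) (Ls ! l)"
    using Cons(4) ds by auto
  ultimately have "PI m n (last ds') (\<lambda>X. foldl (\<lambda>h L. layer_step X L h) (layer_step X L (H X)) Ls)"
    using Cons(1)[of ds'] Cons(3) ds by simp
  then show ?case using ds ds' by simp
qed

lemma MRNN_to_ISD:
  assumes "N \<in> MRNN m n k"
  shows "\<exists>f \<in> ISD (m * n) k. N = restrict (f \<circ> vec_cm m n) (carrier_mat m n)"
proof -
  obtain ds Ls where wf: "net_wf m n k ds Ls" and N: "N = restrict (net_eval ds Ls) (carrier_mat m n)"
    using assms unfolding MRNN_def by auto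
  have "PI m n (last ds) (\<lambda>X. foldl (\<lambda>h L. layer_step X L h) (0\<^sub>v (hd ds)) Ls)"
    using wf unfolding net_wf_def by (intro PI_foldl PI_const) auto
  then have P: "PI m n k (net_eval ds Ls)" using wf unfolding net_wf_def net_eval_def by simp
  obtain fs where fs: "\<And>i. i < k \<Longrightarrow> isd_fun (m*n) (fs i)"
    "\<And>i X. i < k \<Longrightarrow> X \<in> carrier_mat m n \<Longrightarrow> net_eval ds Ls X $ i = fs i (vec_cm m n X)"
    using PI_ex[OF P] by auto
  let ?f = "restrict (\<lambda>v. vec k (\<lambda>i. fs i v)) (carrier_vec (m*n))"
  have "?f \<in> ISD (m*n) k" unfolding ISD_def using fs(1) by auto
  moreover have "N = restrict (?f \<circ> vec_cm m n) (carrier_mat m n)"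
    unfolding N
  proof (intro restrict_ext)
    fix X :: "real mat" assume X: "X \<in> carrier_mat m n"
    have v: "vec_cm m n X \<in> carrier_vec (m*n)" by (simp add: vec_cm_def)
    show "net_eval ds Ls X = (?f \<circ> vec_cm m n) X"
      using v PI_dim[OF P X] fs(2)[OF _ X] by (auto intro!: eq_vecI)
  qed
  ultimately show ?thesis by blast
qed

lemma zero_mv: "dim_vec w = c \<Longrightarrow> 0\<^sub>m d c *\<^sub>v w = 0\<^sub>v d"
  by (intro eq_vecI) (auto simp: scalar_prod_def)

lemma kron_dim: "X \<in> carrier_mat m n \<Longrightarrow> dim_vec (kron_id r X *\<^sub>v h) = r * m"
  using kron_id_carrier[of X m n r] by simp

lemma layer_step_carrier:
  assumes "layer_wf m n d d' L" "X \<in> carrier_mat m n"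
  shows "layer_step X L h \<in> carrier_vec d'"
  using assms unfolding layer_step_def layer_wf_def relu_vec_def by (intro carrier_vecI) auto

definition CNL :: "nat \<Rightarrow> nat \<Rightarrow> nat \<Rightarrow> nat \<Rightarrow> (real mat \<Rightarrow> real vec) \<Rightarrow> bool" where
  "CNL m n len d G \<longleftrightarrow> (\<exists>ds Ls. net_wf m n d ds Ls \<and> length Ls = len \<and> hd ds = 0 \<and>
     (\<forall>l<len. lr0 (Ls!l) * n = ds!l \<and> lr1 (Ls!l) * n = ds!l) \<and>
     (\<forall>X\<in>carrier_mat m n. net_eval ds Ls X = G X))"

definition CN :: "nat \<Rightarrow> nat \<Rightarrow> nat \<Rightarrow> (real mat \<Rightarrow> real vec) \<Rightarrow> bool" where
  "CN m n d G \<longleftrightarrow> (\<exists>len. CNL m n len d G)"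

lemma CN_MRNN: "CN m n k G \<Longrightarrow> restrict G (carrier_mat m n) \<in> MRNN m n k"
proof -
  assume "CN m n k G"
  then obtain ds Ls where wf: "net_wf m n k ds Ls" and ev: "\<forall>X\<in>carrier_mat m n. net_eval ds Ls X = G X"
    unfolding CN_def CNL_def by blast
  have "restrict G (carrier_mat m n) = restrict (net_eval ds Ls) (carrier_mat m n)"
    using ev by (intro restrict_ext) simp
  then show ?thesis using wf unfolding MRNN_def by blast
qed

definition const_layer :: "nat \<Rightarrow> real vec \<Rightarrow> layer" where
  "const_layer d c = Layer c (0\<^sub>m d 0) 0 (0\<^sub>m d 0) (0\<^sub>v d) (0\<^sub>m d 0) 0 (0\<^sub>m d 0)"

lemma const_layer_wf: "c \<in> carrier_vec d \<Longrightarrow> layer_wf m n 0 d (const_layer d c)"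
  unfolding layer_wf_def const_layer_def by auto

lemma const_layer_step: "c \<in> carrier_vec d \<Longrightarrow> X \<in> carrier_mat m n \<Longrightarrow> dim_vec h = 0 \<Longrightarrow>
   layer_step X (const_layer d c) h = c"
  unfolding layer_step_def const_layer_def relu_vec_def
  by (intro eq_vecI) (auto simp: scalar_prod_def)

lemma CNL_const: "c \<in> carrier_vec d \<Longrightarrow> CNL m n 1 d (\<lambda>X. c)"
  unfolding CNL_def
  apply (rule exI[of _ "[0, d]"], rule exI[of _ "[const_layer d c]"])
  by (auto simp: net_wf_def net_eval_def const_layer_wf const_layer_step)
     (auto simp: const_layer_def)

lemma MRNN_const: "c \<in> carrier_vec d \<Longrightarrow> restrict (\<lambda>X. c) (carrier_mat m n) \<in> MRNN m n d"
  using CN_MRNN CNL_const CN_def by blast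

definition triv_layer :: layer where
  "triv_layer = const_layer 0 (0\<^sub>v 0)"

lemma CNL_pad: "CNL m n len d G \<Longrightarrow> CNL m n (Suc len) d G"
proof -
  assume "CNL m n len d G"
  then obtain ds Ls where wf: "net_wf m n d ds Ls" and len: "length Ls = len" and hd: "hd ds = 0"
    and r: "\<forall>l<len. lr0 (Ls!l) * n = ds!l \<and> lr1 (Ls!l) * n = ds!l"
    and ev: "\<forall>X\<in>carrier_mat m n. net_eval ds Ls X = G X"
    unfolding CNL_def by blast
  have ne: "ds \<noteq> []" using wf unfolding net_wf_def by auto
  have wf': "net_wf m n d (0 # ds) (triv_layer # Ls)"
    unfolding net_wf_def
  proof (intro conjI allI impI)
    fix l assume l: "l < length (triv_layer # Ls)"
    show "layer_wf m n ((0 # ds) ! l) ((0 # ds) ! Suc l) ((triv_layer # Ls) ! l)"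
    proof (cases l)
      case 0
      then show ?thesis using hd ne by (simp add: triv_layer_def const_layer_wf hd_conv_nth)
    next
      case (Suc l')
      then show ?thesis using l wf unfolding net_wf_def by simp
    qed
  qed (use wf ne in \<open>auto simp: net_wf_def\<close>)
  have "net_eval (0 # ds) (triv_layer # Ls) X = net_eval ds Ls X" if X: "X \<in> carrier_mat m n" for X
  proof -
    have "layer_step X triv_layer (0\<^sub>v 0) = 0\<^sub>v 0"
      using const_layer_step[OF _ X] unfolding triv_layer_def by simp
    then show ?thesis using hd unfolding net_eval_def by simp
  qed
  moreover have "\<forall>l<Suc len. lr0 ((triv_layer # Ls)!l) * n = (0 # ds)!l \<and> lr1 ((triv_layer # Ls)!l) * n = (0 # ds)!l"
    using r by (auto simp: nth_Cons' triv_layer_def const_layer_def)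
  ultimately show ?thesis unfolding CNL_def using wf' len ev
    by (intro exI[of _ "0 # ds"] exI[of _ "triv_layer # Ls"]) auto
qed

lemma CNL_mono: "CNL m n len d G \<Longrightarrow> len \<le> len' \<Longrightarrow> CNL m n len' d G"
proof -
  assume a: "CNL m n len d G" and b: "len \<le> len'"
  show ?thesis using b
  proof (induction rule: dec_induct)
    case base show ?case using a .
  next
    case (step k) then show ?case using CNL_pad by blast
  qed
qed

lemma CNL_layer:
  assumes "CNL m n len d G" "layer_wf m n d d' L" "lr0 L * n = d" "lr1 L * n = d"
  shows "CNL m n (Suc len) d' (\<lambda>X. layer_step X L (G X))"
proof -
  obtain ds Ls where wf: "net_wf m n d ds Ls" and len: "length Ls = len" and hd: "hd ds = 0"
    and r: "\<forall>l<len. lr0 (Ls!l) * n = ds!l \<and> lr1 (Ls!l) * n = ds!l"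
    and ev: "\<forall>X\<in>carrier_mat m n. net_eval ds Ls X = G X"
    using assms(1) unfolding CNL_def by blast
  have ne: "ds \<noteq> []" and lds: "length ds = Suc len" and last: "last ds = d"
    using wf len unfolding net_wf_def by auto
  have dsl: "ds ! len = d" using last lds ne by (simp add: last_conv_nth)
  have nth1: "(ds @ [d']) ! l = ds ! l" if "l \<le> len" for l using that lds by (simp add: nth_append)
  have wf': "net_wf m n d' (ds @ [d']) (Ls @ [L])"
    unfolding net_wf_def
  proof (intro conjI allI impI)
    fix l assume l: "l < length (Ls @ [L])"
    show "layer_wf m n ((ds @ [d']) ! l) ((ds @ [d']) ! Suc l) ((Ls @ [L]) ! l)"
    proof (cases "l < len")
      case True
      then show ?thesis using wf len nth1[of l] nth1[of "Suc l"] unfolding net_wf_def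
        by (simp add: nth_append)
    next
      case False
      then have "l = len" using l len by simp
      then show ?thesis using assms(2) dsl lds len by (simp add: nth_append)
    qed
  qed (use lds len in auto)
  have ev': "net_eval (ds @ [d']) (Ls @ [L]) X = layer_step X L (G X)" if X: "X \<in> carrier_mat m n" for X
    using ev X hd ne unfolding net_eval_def by simp
  have r': "\<forall>l<Suc len. lr0 ((Ls @ [L])!l) * n = (ds @ [d'])!l \<and> lr1 ((Ls @ [L])!l) * n = (ds @ [d'])!l"
  proof (intro allI impI)
    fix l assume l: "l < Suc len"
    show "lr0 ((Ls @ [L])!l) * n = (ds @ [d'])!l \<and> lr1 ((Ls @ [L])!l) * n = (ds @ [d'])!l"
    proof (cases "l < len")
      case True then show ?thesis using r nth1[of l] len by (simp add: nth_append)
    next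
      case False then have "l = len" using l by simp
      then show ?thesis using assms(3,4) dsl lds len by (simp add: nth_append)
    qed
  qed
  show ?thesis unfolding CNL_def using wf' ev' r' len hd ne
    by (intro exI[of _ "ds @ [d']"] exI[of _ "Ls @ [L]"]) auto
qed

definition bd :: "real mat \<Rightarrow> real mat \<Rightarrow> real mat" where
  "bd A B = four_block_mat A (0\<^sub>m (dim_row A) (dim_col B)) (0\<^sub>m (dim_row B) (dim_col A)) B"

lemma bd_carrier: "A \<in> carrier_mat a1 a2 \<Longrightarrow> B \<in> carrier_mat b1 b2 \<Longrightarrow> bd A B \<in> carrier_mat (a1+b1) (a2+b2)"
  unfolding bd_def by auto

lemma bd_mv:
  assumes A: "A \<in> carrier_mat a1 a2" and B: "B \<in> carrier_mat b1 b2"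
    and u: "u \<in> carrier_vec a2" and v: "v \<in> carrier_vec b2"
  shows "bd A B *\<^sub>v (u @\<^sub>v v) = (A *\<^sub>v u) @\<^sub>v (B *\<^sub>v v)"
proof -
  have "bd A B *\<^sub>v (u @\<^sub>v v) = (A *\<^sub>v u + 0\<^sub>m a1 b2 *\<^sub>v v) @\<^sub>v (0\<^sub>m b1 a2 *\<^sub>v u + B *\<^sub>v v)"
    using four_block_mat_mult_vec[OF A _ _ B u v, of "0\<^sub>m a1 b2" "0\<^sub>m b1 a2"] A B unfolding bd_def by auto
  also have "\<dots> = (A *\<^sub>v u) @\<^sub>v (B *\<^sub>v v)"
    using A B u v by (simp add: zero_mv)
  finally show ?thesis .
qed

lemma relu_append: "relu_vec (u @\<^sub>v v) = relu_vec u @\<^sub>v relu_vec v"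
  unfolding relu_vec_def by (intro eq_vecI) auto

lemma kron_bd:
  assumes X: "X \<in> carrier_mat m n" and m: "0 < m" and n: "0 < n"
  shows "kron_id (r1+r2) X = bd (kron_id r1 X) (kron_id r2 X)"
proof (rule eq_matI)
  fix i j assume i: "i < dim_row (bd (kron_id r1 X) (kron_id r2 X))"
    and j: "j < dim_col (bd (kron_id r1 X) (kron_id r2 X))"
  have K1: "kron_id r1 X \<in> carrier_mat (r1*m) (r1*n)" and K2: "kron_id r2 X \<in> carrier_mat (r2*m) (r2*n)"
    using kron_id_carrier[OF X] by auto
  have i': "i < (r1+r2)*m" and j': "j < (r1+r2)*n"
    using i j bd_carrier[OF K1 K2] by (auto simp: algebra_simps)
  have i'': "i < r1*m + r2*m" and j'': "j < r1*n + r2*n" using i' j' by (auto simp: algebra_simps)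
  show "kron_id (r1 + r2) X $$ (i, j) = bd (kron_id r1 X) (kron_id r2 X) $$ (i, j)"
  proof (cases "i < r1*m")
    case True
    have idm: "i div m < r1" using True m by (simp add: less_mult_imp_div_less)
    show ?thesis
    proof (cases "j < r1*n")
      case True2: True
      then show ?thesis using True i' j' i'' j'' K1 K2 kron_id_index[OF X i'] kron_id_index[OF X True True2]
        unfolding bd_def by simp
    next
      case False
      then have "r1 \<le> j div n" using n by (metis div_le_mono nonzero_mult_div_cancel_right not_le
        order_less_imp_le neq0_conv)
      then show ?thesis using True False i' j' i'' j'' K1 K2 kron_id_index[OF X i' j'] idm
        unfolding bd_def by simp
    qed
  next
    case False
    obtain i2 where i2: "i = r1*m + i2" using False by (metis le_add_diff_inverse not_less)
    have i2b: "i2 < r2*m" using i' i2 by (simp add: algebra_simps)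
    have idiv: "i div m = r1 + i2 div m" and imod: "i mod m = i2 mod m" using i2 m by auto
    show ?thesis
    proof (cases "j < r1*n")
      case True
      have "j div n < r1" using True n by (simp add: less_mult_imp_div_less)
      then show ?thesis using True False i' j' i'' j'' K1 K2 kron_id_index[OF X i' j'] idiv
        unfolding bd_def by simp
    next
      case False2: False
      obtain j2 where j2: "j = r1*n + j2" using False2 by (metis le_add_diff_inverse not_less)
      have j2b: "j2 < r2*n" using j' j2 by (simp add: algebra_simps)
      have jdiv: "j div n = r1 + j2 div n" and jmod: "j mod n = j2 mod n" using j2 n by auto
      show ?thesis using False False2 i' j' i'' j'' K1 K2 kron_id_index[OF X i' j'] kron_id_index[OF X i2b j2b]
        idiv imod jdiv jmod i2 j2 unfolding bd_def by simp
    qed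
  qed
next
  show "dim_row (kron_id (r1 + r2) X) = dim_row (bd (kron_id r1 X) (kron_id r2 X))"
    "dim_col (kron_id (r1 + r2) X) = dim_col (bd (kron_id r1 X) (kron_id r2 X))"
    using X by (auto simp: kron_id_def bd_def algebra_simps)
qed

lemma kron_append:
  assumes X: "X \<in> carrier_mat m n" and m: "0 < m" and n: "0 < n"
    and h1: "h1 \<in> carrier_vec (r1*n)" and h2: "h2 \<in> carrier_vec (r2*n)"
  shows "kron_id (r1+r2) X *\<^sub>v (h1 @\<^sub>v h2) = (kron_id r1 X *\<^sub>v h1) @\<^sub>v (kron_id r2 X *\<^sub>v h2)"
  unfolding kron_bd[OF X m n] using kron_id_carrier[OF X] h1 h2 by (intro bd_mv) auto

definition comb :: "layer \<Rightarrow> layer \<Rightarrow> layer" where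
  "comb L1 L2 = Layer (lb0 L1 @\<^sub>v lb0 L2) (bd (lA0 L1) (lA0 L2)) (lr0 L1 + lr0 L2) (bd (lB0 L1) (lB0 L2))
     (lb1 L1 @\<^sub>v lb1 L2) (bd (lA1 L1) (lA1 L2)) (lr1 L1 + lr1 L2) (bd (lB1 L1) (lB1 L2))"

lemma comb_wf:
  assumes L1: "layer_wf m n d1 e1 L1" and L2: "layer_wf m n d2 e2 L2"
    and r: "lr0 L1 * n = d1" "lr1 L1 * n = d1" "lr0 L2 * n = d2" "lr1 L2 * n = d2"
  shows "layer_wf m n (d1+d2) (e1+e2) (comb L1 L2)"
  using L1 L2 r unfolding layer_wf_def comb_def
  by (auto intro!: bd_carrier simp: algebra_simps)

lemma comb_step:
  assumes L1: "layer_wf m n d1 e1 L1" and L2: "layer_wf m n d2 e2 L2"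
    and r: "lr0 L1 * n = d1" "lr1 L1 * n = d1" "lr0 L2 * n = d2" "lr1 L2 * n = d2"
    and X: "X \<in> carrier_mat m n" and m: "0 < m" and n: "0 < n"
    and h1: "h1 \<in> carrier_vec d1" and h2: "h2 \<in> carrier_vec d2"
  shows "layer_step X (comb L1 L2) (h1 @\<^sub>v h2) = layer_step X L1 h1 @\<^sub>v layer_step X L2 h2"
proof -
  note w1 = L1[unfolded layer_wf_def] and w2 = L2[unfolded layer_wf_def]
  have K0: "kron_id (lr0 L1 + lr0 L2) X *\<^sub>v (h1 @\<^sub>v h2) = (kron_id (lr0 L1) X *\<^sub>v h1) @\<^sub>v (kron_id (lr0 L2) X *\<^sub>v h2)"
    using kron_append[OF X m n] h1 h2 r by simp
  have K1: "kron_id (lr1 L1 + lr1 L2) X *\<^sub>v (h1 @\<^sub>v h2) = (kron_id (lr1 L1) X *\<^sub>v h1) @\<^sub>v (kron_id (lr1 L2) X *\<^sub>v h2)"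
    using kron_append[OF X m n] h1 h2 r by simp
  have k01: "kron_id (lr0 L1) X *\<^sub>v h1 \<in> carrier_vec (lr0 L1 * m)"
    and k02: "kron_id (lr0 L2) X *\<^sub>v h2 \<in> carrier_vec (lr0 L2 * m)"
    and k11: "kron_id (lr1 L1) X *\<^sub>v h1 \<in> carrier_vec (lr1 L1 * m)"
    and k12: "kron_id (lr1 L2) X *\<^sub>v h2 \<in> carrier_vec (lr1 L2 * m)"
    using kron_dim[OF X] by (auto intro: carrier_vecI)
  have A0: "bd (lA0 L1) (lA0 L2) *\<^sub>v (h1 @\<^sub>v h2) = (lA0 L1 *\<^sub>v h1) @\<^sub>v (lA0 L2 *\<^sub>v h2)"
    using w1 w2 h1 h2 by (intro bd_mv) auto
  have A1: "bd (lA1 L1) (lA1 L2) *\<^sub>v (h1 @\<^sub>v h2) = (lA1 L1 *\<^sub>v h1) @\<^sub>v (lA1 L2 *\<^sub>v h2)"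
    using w1 w2 h1 h2 by (intro bd_mv) auto
  have B0: "bd (lB0 L1) (lB0 L2) *\<^sub>v ((kron_id (lr0 L1) X *\<^sub>v h1) @\<^sub>v (kron_id (lr0 L2) X *\<^sub>v h2))
     = (lB0 L1 *\<^sub>v (kron_id (lr0 L1) X *\<^sub>v h1)) @\<^sub>v (lB0 L2 *\<^sub>v (kron_id (lr0 L2) X *\<^sub>v h2))"
    using w1 w2 k01 k02 by (intro bd_mv) auto
  have B1: "bd (lB1 L1) (lB1 L2) *\<^sub>v ((kron_id (lr1 L1) X *\<^sub>v h1) @\<^sub>v (kron_id (lr1 L2) X *\<^sub>v h2))
     = (lB1 L1 *\<^sub>v (kron_id (lr1 L1) X *\<^sub>v h1)) @\<^sub>v (lB1 L2 *\<^sub>v (kron_id (lr1 L2) X *\<^sub>v h2))"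
    using w1 w2 k11 k12 by (intro bd_mv) auto
  have c1: "lA0 L1 *\<^sub>v h1 \<in> carrier_vec e1" "lA1 L1 *\<^sub>v h1 \<in> carrier_vec e1"
    "lB0 L1 *\<^sub>v (kron_id (lr0 L1) X *\<^sub>v h1) \<in> carrier_vec e1"
    "lB1 L1 *\<^sub>v (kron_id (lr1 L1) X *\<^sub>v h1) \<in> carrier_vec e1"
    "lb0 L1 \<in> carrier_vec e1" "lb1 L1 \<in> carrier_vec e1"
    using w1 by (auto intro: carrier_vecI)
  have c2: "lA0 L2 *\<^sub>v h2 \<in> carrier_vec e2" "lA1 L2 *\<^sub>v h2 \<in> carrier_vec e2"
    "lB0 L2 *\<^sub>v (kron_id (lr0 L2) X *\<^sub>v h2) \<in> carrier_vec e2"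
    "lB1 L2 *\<^sub>v (kron_id (lr1 L2) X *\<^sub>v h2) \<in> carrier_vec e2"
    "lb0 L2 \<in> carrier_vec e2" "lb1 L2 \<in> carrier_vec e2"
    using w2 by (auto intro: carrier_vecI)
  have rc: "\<And>v e. v \<in> carrier_vec e \<Longrightarrow> relu_vec v \<in> carrier_vec e"
    unfolding relu_vec_def by (auto intro: carrier_vecI)
  have s1: "(lb0 L1 @\<^sub>v lb0 L2) + ((lA0 L1 *\<^sub>v h1) @\<^sub>v (lA0 L2 *\<^sub>v h2)) =
     (lb0 L1 + lA0 L1 *\<^sub>v h1) @\<^sub>v (lb0 L2 + lA0 L2 *\<^sub>v h2)"
    using c1 c2 by (intro append_vec_add) auto
  have s2: "((lb0 L1 + lA0 L1 *\<^sub>v h1) @\<^sub>v (lb0 L2 + lA0 L2 *\<^sub>v h2)) +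
     ((lB0 L1 *\<^sub>v (kron_id (lr0 L1) X *\<^sub>v h1)) @\<^sub>v (lB0 L2 *\<^sub>v (kron_id (lr0 L2) X *\<^sub>v h2))) =
     (lb0 L1 + lA0 L1 *\<^sub>v h1 + lB0 L1 *\<^sub>v (kron_id (lr0 L1) X *\<^sub>v h1)) @\<^sub>v
     (lb0 L2 + lA0 L2 *\<^sub>v h2 + lB0 L2 *\<^sub>v (kron_id (lr0 L2) X *\<^sub>v h2))"
    using c1 c2 by (intro append_vec_add add_carrier_vec) auto
  have s3: "(lb1 L1 @\<^sub>v lb1 L2) + ((lA1 L1 *\<^sub>v h1) @\<^sub>v (lA1 L2 *\<^sub>v h2)) =
     (lb1 L1 + lA1 L1 *\<^sub>v h1) @\<^sub>v (lb1 L2 + lA1 L2 *\<^sub>v h2)"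
    using c1 c2 by (intro append_vec_add) auto
  have s4: "((lb1 L1 + lA1 L1 *\<^sub>v h1) @\<^sub>v (lb1 L2 + lA1 L2 *\<^sub>v h2)) +
     ((lB1 L1 *\<^sub>v (kron_id (lr1 L1) X *\<^sub>v h1)) @\<^sub>v (lB1 L2 *\<^sub>v (kron_id (lr1 L2) X *\<^sub>v h2))) =
     (lb1 L1 + lA1 L1 *\<^sub>v h1 + lB1 L1 *\<^sub>v (kron_id (lr1 L1) X *\<^sub>v h1)) @\<^sub>v
     (lb1 L2 + lA1 L2 *\<^sub>v h2 + lB1 L2 *\<^sub>v (kron_id (lr1 L2) X *\<^sub>v h2))"
    using c1 c2 by (intro append_vec_add add_carrier_vec) auto
  have s5: "((lb0 L1 + lA0 L1 *\<^sub>v h1 + lB0 L1 *\<^sub>v (kron_id (lr0 L1) X *\<^sub>v h1)) @\<^sub>v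
     (lb0 L2 + lA0 L2 *\<^sub>v h2 + lB0 L2 *\<^sub>v (kron_id (lr0 L2) X *\<^sub>v h2))) +
     (relu_vec (lb1 L1 + lA1 L1 *\<^sub>v h1 + lB1 L1 *\<^sub>v (kron_id (lr1 L1) X *\<^sub>v h1)) @\<^sub>v
      relu_vec (lb1 L2 + lA1 L2 *\<^sub>v h2 + lB1 L2 *\<^sub>v (kron_id (lr1 L2) X *\<^sub>v h2))) =
     (lb0 L1 + lA0 L1 *\<^sub>v h1 + lB0 L1 *\<^sub>v (kron_id (lr0 L1) X *\<^sub>v h1) +
      relu_vec (lb1 L1 + lA1 L1 *\<^sub>v h1 + lB1 L1 *\<^sub>v (kron_id (lr1 L1) X *\<^sub>v h1))) @\<^sub>v
     (lb0 L2 + lA0 L2 *\<^sub>v h2 + lB0 L2 *\<^sub>v (kron_id (lr0 L2) X *\<^sub>v h2) +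
      relu_vec (lb1 L2 + lA1 L2 *\<^sub>v h2 + lB1 L2 *\<^sub>v (kron_id (lr1 L2) X *\<^sub>v h2)))"
    using c1 c2 by (intro append_vec_add add_carrier_vec rc) auto
  show ?thesis
    unfolding layer_step_def comb_def layer.sel K0 K1 A0 A1 B0 B1 s1 s2 s3 s4 relu_append s5 ..
qed

definition mwf :: "nat \<Rightarrow> nat \<Rightarrow> nat list \<Rightarrow> layer list \<Rightarrow> bool" where
  "mwf m n ds Ls \<longleftrightarrow> length ds = Suc (length Ls) \<and>
     (\<forall>l<length Ls. layer_wf m n (ds!l) (ds!Suc l) (Ls!l) \<and> lr0 (Ls!l) * n = ds!l \<and> lr1 (Ls!l) * n = ds!l)"

lemma par_foldl:
  assumes "length Ls1 = length Ls2" "mwf m n ds1 Ls1" "mwf m n ds2 Ls2"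
    "h1 \<in> carrier_vec (hd ds1)" "h2 \<in> carrier_vec (hd ds2)"
    "X \<in> carrier_mat m n" "0 < m" "0 < n"
  shows "foldl (\<lambda>h L. layer_step X L h) (h1 @\<^sub>v h2) (map2 comb Ls1 Ls2) =
     foldl (\<lambda>h L. layer_step X L h) h1 Ls1 @\<^sub>v foldl (\<lambda>h L. layer_step X L h) h2 Ls2"
  using assms
proof (induction Ls1 arbitrary: Ls2 ds1 ds2 h1 h2)
  case Nil
  then show ?case by simp
next
  case (Cons L1 Ls1)
  obtain L2 Ls2' where Ls2: "Ls2 = L2 # Ls2'" using Cons(2) by (cases Ls2) auto
  obtain a ds1' where ds1: "ds1 = a # ds1'" using Cons(3) unfolding mwf_def by (cases ds1) auto
  obtain b ds2' where ds2: "ds2 = b # ds2'" using Cons(4) unfolding mwf_def by (cases ds2) auto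
  have ne1: "ds1' \<noteq> []" and ne2: "ds2' \<noteq> []" using Cons(3,4) ds1 ds2 Ls2 unfolding mwf_def by auto
  have w1: "layer_wf m n a (hd ds1') L1" "lr0 L1 * n = a" "lr1 L1 * n = a"
    using Cons(3) ds1 ne1 unfolding mwf_def by (auto simp: hd_conv_nth)
  have w2: "layer_wf m n b (hd ds2') L2" "lr0 L2 * n = b" "lr1 L2 * n = b"
    using Cons(4) ds2 ne2 Ls2 unfolding mwf_def by (auto simp: hd_conv_nth)
  have m1: "mwf m n ds1' Ls1" using Cons(3) ds1 unfolding mwf_def by auto
  have m2: "mwf m n ds2' Ls2'" using Cons(4) ds2 Ls2 unfolding mwf_def by auto
  have st: "layer_step X (comb L1 L2) (h1 @\<^sub>v h2) = layer_step X L1 h1 @\<^sub>v layer_step X L2 h2"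
    using comb_step[OF w1(1) w2(1) w1(2,3) w2(2,3) Cons(7,8,9)] Cons(5,6) ds1 ds2 by simp
  have c1: "layer_step X L1 h1 \<in> carrier_vec (hd ds1')" using layer_step_carrier[OF w1(1) Cons(7)] .
  have c2: "layer_step X L2 h2 \<in> carrier_vec (hd ds2')" using layer_step_carrier[OF w2(1) Cons(7)] .
  show ?case using Cons(1)[OF _ m1 m2 c1 c2 Cons(7,8,9)] Cons(2) Ls2 st by simp
qed

lemma CNL_par:
  assumes G1: "CNL m n len d1 G1" and G2: "CNL m n len d2 G2" and m: "0 < m" and n: "0 < n"
  shows "CNL m n len (d1+d2) (\<lambda>X. G1 X @\<^sub>v G2 X)"
proof -
  obtain ds1 Ls1 where wf1: "net_wf m n d1 ds1 Ls1" and len1: "length Ls1 = len" and hd1: "hd ds1 = 0"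
    and r1: "\<forall>l<len. lr0 (Ls1!l) * n = ds1!l \<and> lr1 (Ls1!l) * n = ds1!l"
    and ev1: "\<forall>X\<in>carrier_mat m n. net_eval ds1 Ls1 X = G1 X"
    using G1 unfolding CNL_def by blast
  obtain ds2 Ls2 where wf2: "net_wf m n d2 ds2 Ls2" and len2: "length Ls2 = len" and hd2: "hd ds2 = 0"
    and r2: "\<forall>l<len. lr0 (Ls2!l) * n = ds2!l \<and> lr1 (Ls2!l) * n = ds2!l"
    and ev2: "\<forall>X\<in>carrier_mat m n. net_eval ds2 Ls2 X = G2 X"
    using G2 unfolding CNL_def by blast
  have l1: "length ds1 = Suc len" and l2: "length ds2 = Suc len" using wf1 wf2 len1 len2 unfolding net_wf_def by auto
  have mw1: "mwf m n ds1 Ls1" using wf1 r1 len1 unfolding mwf_def net_wf_def by auto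
  have mw2: "mwf m n ds2 Ls2" using wf2 r2 len2 unfolding mwf_def net_wf_def by auto
  define ds where "ds = map2 (+) ds1 ds2"
  define Ls where "Ls = map2 comb Ls1 Ls2"
  have lds: "length ds = Suc len" and lLs: "length Ls = len" using l1 l2 len1 len2 unfolding ds_def Ls_def by auto
  have dsn: "ds ! l = ds1 ! l + ds2 ! l" if "l < Suc len" for l using that l1 l2 unfolding ds_def by simp
  have Lsn: "Ls ! l = comb (Ls1 ! l) (Ls2 ! l)" if "l < len" for l using that len1 len2 unfolding Ls_def by simp
  have hd: "hd ds = 0"
  proof -
    have "hd ds = ds ! 0" using lds by (cases ds) auto
    also have "\<dots> = ds1 ! 0 + ds2 ! 0" using dsn by simp
    also have "\<dots> = 0" using hd1 hd2 l1 l2 by (cases ds1; cases ds2) auto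
    finally show ?thesis .
  qed
  have last: "last ds = d1 + d2"
  proof -
    have "last ds = ds ! len" using lds by (subst last_conv_nth) auto
    also have "\<dots> = ds1 ! len + ds2 ! len" using dsn by simp
    also have "\<dots> = d1 + d2"
    proof -
      have "ds1 \<noteq> []" "ds2 \<noteq> []" using l1 l2 by auto
      then show ?thesis using wf1 wf2 l1 l2 len1 len2 unfolding net_wf_def by (simp add: last_conv_nth)
    qed
    finally show ?thesis .
  qed
  have wfl: "layer_wf m n (ds!l) (ds!Suc l) (Ls!l)" if l: "l < len" for l
  proof -
    have a: "layer_wf m n (ds1!l) (ds1!Suc l) (Ls1!l)" "layer_wf m n (ds2!l) (ds2!Suc l) (Ls2!l)"
      using wf1 wf2 l len1 len2 unfolding net_wf_def by auto
    show ?thesis using comb_wf[OF a] r1 r2 l dsn[of l] dsn[of "Suc l"] Lsn[OF l] by simp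
  qed
  have rl: "\<forall>l<len. lr0 (Ls!l) * n = ds!l \<and> lr1 (Ls!l) * n = ds!l"
    using r1 r2 dsn Lsn by (simp add: comb_def algebra_simps)
  have ev: "net_eval ds Ls X = G1 X @\<^sub>v G2 X" if X: "X \<in> carrier_mat m n" for X
  proof -
    have "net_eval ds Ls X = foldl (\<lambda>h L. layer_step X L h) (0\<^sub>v 0 @\<^sub>v 0\<^sub>v 0) Ls"
      unfolding net_eval_def hd by (rule arg_cong[where f="\<lambda>h. foldl _ h _"]) (intro eq_vecI, auto)
    also have "\<dots> = net_eval ds1 Ls1 X @\<^sub>v net_eval ds2 Ls2 X"
      unfolding Ls_def net_eval_def hd1 hd2
      using par_foldl[OF _ mw1 mw2 _ _ X m n, of "0\<^sub>v 0" "0\<^sub>v 0"] len1 len2 hd1 hd2 by simp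
    finally show ?thesis using ev1 ev2 X by simp
  qed
  show ?thesis unfolding CNL_def
    using wfl rl ev lds lLs hd last
    by (intro exI[of _ ds] exI[of _ Ls]) (auto simp: net_wf_def)
qed

lemma CN_par: "CN m n d1 G1 \<Longrightarrow> CN m n d2 G2 \<Longrightarrow> 0 < m \<Longrightarrow> 0 < n \<Longrightarrow> CN m n (d1+d2) (\<lambda>X. G1 X @\<^sub>v G2 X)"
proof -
  assume "CN m n d1 G1" "CN m n d2 G2" and mn: "0 < m" "0 < n"
  then obtain l1 l2 where a: "CNL m n l1 d1 G1" and b: "CNL m n l2 d2 G2" unfolding CN_def by blast
  have "CNL m n (max l1 l2) d1 G1" "CNL m n (max l1 l2) d2 G2"
    using CNL_mono[OF a] CNL_mono[OF b] by auto
  then show ?thesis unfolding CN_def using CNL_par mn by blast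
qed

lemma CN_layer: "CN m n d G \<Longrightarrow> layer_wf m n d d' L \<Longrightarrow> lr0 L * n = d \<Longrightarrow> lr1 L * n = d \<Longrightarrow>
   CN m n d' (\<lambda>X. layer_step X L (G X))"
  unfolding CN_def using CNL_layer by blast

lemma CN_cong: "CN m n d G \<Longrightarrow> (\<And>X. X \<in> carrier_mat m n \<Longrightarrow> G X = G' X) \<Longrightarrow> CN m n d G'"
  unfolding CN_def CNL_def by auto

lemma CN_const: "c \<in> carrier_vec d \<Longrightarrow> CN m n d (\<lambda>X. c)"
  unfolding CN_def using CNL_const by blast

definition sv :: "nat \<Rightarrow> nat \<Rightarrow> real \<Rightarrow> real vec" where
  "sv n b t = vec n (\<lambda>j. if j = b then t else 0)"

definition NT :: "nat \<Rightarrow> nat \<Rightarrow> (real vec \<Rightarrow> real) \<Rightarrow> bool" where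
  "NT m n g \<longleftrightarrow> (\<forall>b<n. CN m n n (\<lambda>X. sv n b (g (vec_cm m n X))))"

lemma sum_delta_r: "c < (N::nat) \<Longrightarrow> (\<Sum>j<N. f j * (if j = c then t else 0)) = f c * (t::real)"
proof -
  assume c: "c < N"
  have "(\<Sum>j<N. f j * (if j = c then t else 0)) = (\<Sum>j<N. (if j = c then f j * t else 0))"
    by (intro sum.cong) auto
  also have "\<dots> = f c * t" using c by (simp add: sum.delta)
  finally show ?thesis .
qed

lemma sum_delta_l: "c < (N::nat) \<Longrightarrow> (\<Sum>j<N. (if j = c then t else 0) * f j) = t * (f c::real)"
proof -
  assume c: "c < N"
  have "(\<Sum>j<N. (if j = c then t else 0) * f j) = (\<Sum>j<N. (if j = c then t * f j else 0))"
    by (intro sum.cong) auto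
  also have "\<dots> = t * f c" using c by (simp add: sum.delta)
  finally show ?thesis .
qed

lemma sum_delta2: "a < (N::nat) \<Longrightarrow> a' < N \<Longrightarrow>
  (\<Sum>j<N. ((if j = a then c1 else 0) + (if j = a' then c2 else 0)) * f j) = c1 * f a + c2 * (f a' :: real)"
proof -
  assume a: "a < N" and a': "a' < N"
  have "(\<Sum>j<N. ((if j = a then c1 else 0) + (if j = a' then c2 else 0)) * f j) =
     (\<Sum>j<N. (if j = a then c1 else 0) * f j) + (\<Sum>j<N. (if j = a' then c2 else 0) * f j)"
    by (simp add: distrib_right sum.distrib)
  also have "\<dots> = c1 * f a + c2 * f a'" using sum_delta_l[OF a] sum_delta_l[OF a'] by simp
  finally show ?thesis .
qed

definition lin2 :: "nat \<Rightarrow> real \<Rightarrow> real \<Rightarrow> real mat" where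
  "lin2 n a1 a2 = mat n (n+n) (\<lambda>(i,j). (if j = i then a1 else 0) + (if j = i + n then a2 else 0))"

lemma lin2_carrier: "lin2 n a1 a2 \<in> carrier_mat n (n+n)"
  unfolding lin2_def by auto

lemma lin2_dims[simp]: "dim_row (lin2 n a1 a2) = n" "dim_col (lin2 n a1 a2) = n+n"
  unfolding lin2_def by auto

lemma lin2_mv: "u \<in> carrier_vec n \<Longrightarrow> v \<in> carrier_vec n \<Longrightarrow> i < n \<Longrightarrow>
  (lin2 n a1 a2 *\<^sub>v (u @\<^sub>v v)) $ i = a1 * u $ i + a2 * v $ i"
proof -
  assume u: "u \<in> carrier_vec n" and v: "v \<in> carrier_vec n" and i: "i < n"
  have "(lin2 n a1 a2 *\<^sub>v (u @\<^sub>v v)) $ i = (\<Sum>j<n+n. lin2 n a1 a2 $$ (i,j) * (u @\<^sub>v v) $ j)"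
    using u v i lin2_carrier by (intro mv_index) auto
  also have "\<dots> = (\<Sum>j<n+n. ((if j = i then a1 else 0) + (if j = i + n then a2 else 0)) * (u @\<^sub>v v) $ j)"
    using i by (intro sum.cong) (auto simp: lin2_def)
  also have "\<dots> = a1 * (u @\<^sub>v v) $ i + a2 * (u @\<^sub>v v) $ (i + n)"
    using i by (intro sum_delta2) auto
  also have "\<dots> = a1 * u $ i + a2 * v $ i" using u v i by simp
  finally show ?thesis .
qed

definition binL :: "nat \<Rightarrow> nat \<Rightarrow> real \<Rightarrow> real \<Rightarrow> real \<Rightarrow> real \<Rightarrow> layer" where
  "binL m n a1 a2 b1 b2 = Layer (0\<^sub>v n) (lin2 n a1 a2) 2 (0\<^sub>m n (2*m)) (0\<^sub>v n) (lin2 n b1 b2) 2 (0\<^sub>m n (2*m))"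

lemma binL_wf: "layer_wf m n (n+n) n (binL m n a1 a2 b1 b2)"
  unfolding layer_wf_def binL_def using lin2_carrier by auto

lemma binL_step:
  assumes X: "X \<in> carrier_mat m n" and u: "u \<in> carrier_vec n" and v: "v \<in> carrier_vec n"
  shows "layer_step X (binL m n a1 a2 b1 b2) (u @\<^sub>v v) =
    vec n (\<lambda>i. a1 * u $ i + a2 * v $ i + max 0 (b1 * u $ i + b2 * v $ i))"
proof -
  have z: "0\<^sub>m n (2*m) *\<^sub>v (kron_id 2 X *\<^sub>v (u @\<^sub>v v)) = 0\<^sub>v n"
    using kron_dim[OF X] by (intro zero_mv) simp
  show ?thesis
    unfolding layer_step_def binL_def layer.sel z
    using u v lin2_mv[OF u v] lin2_carrier
    by (intro eq_vecI) (auto simp: relu_vec_def)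
qed

lemma NT_bin:
  assumes g1: "NT m n g1" and g2: "NT m n g2" and m: "0 < m" and n: "0 < n"
  shows "NT m n (\<lambda>x. a1 * g1 x + a2 * g2 x + max 0 (b1 * g1 x + b2 * g2 x))"
  unfolding NT_def
proof (intro allI impI)
  fix b assume b: "b < n"
  have "CN m n (n+n) (\<lambda>X. sv n b (g1 (vec_cm m n X)) @\<^sub>v sv n b (g2 (vec_cm m n X)))"
    using g1 g2 b m n unfolding NT_def by (intro CN_par) auto
  then have "CN m n n (\<lambda>X. layer_step X (binL m n a1 a2 b1 b2)
      (sv n b (g1 (vec_cm m n X)) @\<^sub>v sv n b (g2 (vec_cm m n X))))"
    by (rule CN_layer[OF _ binL_wf]) (simp_all add: binL_def)
  then show "CN m n n (\<lambda>X. sv n b (a1 * g1 (vec_cm m n X) + a2 * g2 (vec_cm m n X) +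
      max 0 (b1 * g1 (vec_cm m n X) + b2 * g2 (vec_cm m n X))))"
    by (rule CN_cong) (subst binL_step, auto simp: sv_def intro!: eq_vecI)
qed

definition xL :: "nat \<Rightarrow> nat \<Rightarrow> nat \<Rightarrow> nat \<Rightarrow> layer" where
  "xL m n a b = Layer (0\<^sub>v n) (0\<^sub>m n n) 1 (mat n m (\<lambda>(i,p). if i = b \<and> p = a then 1 else 0))
     (0\<^sub>v n) (0\<^sub>m n n) 1 (0\<^sub>m n m)"

lemma xL_wf: "layer_wf m n n n (xL m n a b)"
  unfolding layer_wf_def xL_def by auto

lemma kron_dims[simp]: "dim_row (kron_id r X) = r * dim_row X" "dim_col (kron_id r X) = r * dim_col X"
  unfolding kron_id_def by auto

lemma xL_step:
  assumes X: "X \<in> carrier_mat m n" and a: "a < m" and b: "b < n" and c: "c < n"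
  shows "layer_step X (xL m n a b) (sv n c t) = sv n b (X $$ (a,c) * t)"
proof -
  let ?h = "sv n c t"
  let ?w = "kron_id 1 X *\<^sub>v ?h"
  have h: "?h \<in> carrier_vec n" unfolding sv_def by auto
  have K: "kron_id 1 X \<in> carrier_mat m n" using kron_id_carrier[OF X, of 1] by simp
  have wa: "?w $ a = X $$ (a,c) * t"
  proof -
    have "?w $ a = (\<Sum>j<n. kron_id 1 X $$ (a,j) * ?h $ j)" using mv_index[OF K _ a] h by simp
    also have "\<dots> = (\<Sum>j<n. X $$ (a,j) * (if j = c then t else 0))"
      using kron_id_index[OF X, of a 1] a by (intro sum.cong) (auto simp: sv_def)
    also have "\<dots> = X $$ (a,c) * t" using c by (rule sum_delta_r)
    finally show ?thesis .
  qed
  have w: "?w \<in> carrier_vec m" using kron_dim[OF X, of 1 ?h] by (intro carrier_vecI) simp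
  have z: "0\<^sub>m n m *\<^sub>v (kron_id 1 X *\<^sub>v ?h) = 0\<^sub>v n" by (rule zero_mv[OF carrier_vecD[OF w]])
  have z2: "0\<^sub>m n n *\<^sub>v ?h = 0\<^sub>v n" using h by (intro zero_mv) simp
  have B: "(mat n m (\<lambda>(i,p). if i = b \<and> p = a then 1 else 0) *\<^sub>v ?w) $ i = (if i = b then ?w $ a else 0)"
    if i: "i < n" for i
  proof -
    have "(mat n m (\<lambda>(i,p). if i = b \<and> p = a then 1 else 0) *\<^sub>v ?w) $ i =
        (\<Sum>p<m. (mat n m (\<lambda>(i,p). if i = b \<and> p = a then 1 else 0)) $$ (i,p) * ?w $ p)"
      using w i X by (intro mv_index) auto
    also have "\<dots> = (\<Sum>p<m. (if p = a then (if i = b then 1 else 0) else 0) * ?w $ p)"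
      using i by (intro sum.cong) auto
    also have "\<dots> = (if i = b then ?w $ a else 0)" using a by (subst sum_delta_l) auto
    finally show ?thesis .
  qed
  show ?thesis
    unfolding layer_step_def xL_def layer.sel z z2
    using B wa by (intro eq_vecI) (auto simp: relu_vec_def sv_def)
qed

lemma NT_xmul:
  assumes g: "NT m n g" and a: "a < m" and c: "c < n"
  shows "NT m n (\<lambda>x. x $ (c*m + a) * g x)"
  unfolding NT_def
proof (intro allI impI)
  fix b assume b: "b < n"
  have "CN m n n (\<lambda>X. sv n c (g (vec_cm m n X)))" using g c unfolding NT_def by auto
  then have "CN m n n (\<lambda>X. layer_step X (xL m n a b) (sv n c (g (vec_cm m n X))))"
    by (rule CN_layer[OF _ xL_wf]) (simp_all add: xL_def)
  then show "CN m n n (\<lambda>X. sv n b (vec_cm m n X $ (c*m + a) * g (vec_cm m n X)))"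
    by (rule CN_cong) (simp add: xL_step a b c vec_cm_index)
qed

lemma NT_cong: "NT m n f \<Longrightarrow> (\<And>x. f x = g x) \<Longrightarrow> NT m n g"
proof -
  assume "NT m n f" "\<And>x. f x = g x"
  then have "f = g" by auto
  then show "NT m n g" using \<open>NT m n f\<close> by simp
qed

lemma NT_const: "NT m n (\<lambda>x. c)"
  unfolding NT_def by (auto intro!: CN_const simp: sv_def)

lemma NT_add:
  assumes f: "NT m n f" and g: "NT m n g" and m0: "0 < m" and n0: "0 < n"
  shows "NT m n (\<lambda>x. f x + g x)"
proof -
  have "NT m n (\<lambda>x. 1 * f x + 1 * g x + max 0 (0 * f x + 0 * g x))"
    using f g m0 n0 by (rule NT_bin)
  then show ?thesis by (rule NT_cong) simp
qed

lemma NT_neg: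
  assumes f: "NT m n f" and m0: "0 < m" and n0: "0 < n"
  shows "NT m n (\<lambda>x. - f x)"
proof -
  have "NT m n (\<lambda>x. (-1) * f x + 0 * f x + max 0 (0 * f x + 0 * f x))"
    using f f m0 n0 by (rule NT_bin)
  then show ?thesis by (rule NT_cong) simp
qed

lemma NT_max:
  assumes f: "NT m n f" and g: "NT m n g" and m0: "0 < m" and n0: "0 < n"
  shows "NT m n (\<lambda>x. max (f x) (g x))"
proof -
  have "NT m n (\<lambda>x. 0 * f x + 1 * g x + max 0 (1 * f x + (-1) * g x))"
    using f g m0 n0 by (rule NT_bin)
  then show ?thesis by (rule NT_cong) (simp add: max_def)
qed

lemma NT_min: "NT m n f \<Longrightarrow> NT m n g \<Longrightarrow> 0 < m \<Longrightarrow> 0 < n \<Longrightarrow> NT m n (\<lambda>x. min (f x) (g x))"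
proof -
  assume f: "NT m n f" and g: "NT m n g" and m: "0 < m" and n: "0 < n"
  have "NT m n (\<lambda>x. - max (- f x) (- g x))" using NT_neg NT_max f g m n by blast
  then show ?thesis by (rule NT_cong) (simp add: max_def min_def)
qed

inductive Qf :: "nat \<Rightarrow> (real vec \<Rightarrow> real) \<Rightarrow> bool" for N :: nat where
  Qc: "Qf N (\<lambda>x. c)"
| Qa: "Qf N f \<Longrightarrow> Qf N g \<Longrightarrow> Qf N (\<lambda>x. f x + g x)"
| Qx: "i < N \<Longrightarrow> Qf N g \<Longrightarrow> Qf N (\<lambda>x. x $ i * g x)"

lemma Qf_scale: "Qf N g \<Longrightarrow> Qf N (\<lambda>x. c * g x)"
proof (induction rule: Qf.induct)
  case (Qc c')
  then show ?case using Qf.Qc by simp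
next
  case (Qa f g)
  have "Qf N (\<lambda>x. c * f x + c * g x)" using Qa.IH by (rule Qf.Qa)
  then show ?case by (simp add: distrib_left)
next
  case (Qx i g)
  have "Qf N (\<lambda>x. x $ i * (c * g x))" using Qx.hyps(1) Qx.IH by (rule Qf.Qx)
  then show ?case by (simp add: mult.left_commute)
qed

lemma Qf_mult: "Qf N p \<Longrightarrow> Qf N q \<Longrightarrow> Qf N (\<lambda>x. p x * q x)"
proof (induction rule: Qf.induct)
  case (Qc c)
  then show ?case by (rule Qf_scale)
next
  case (Qa f g)
  then have "Qf N (\<lambda>x. f x * q x + g x * q x)" by (intro Qf.Qa)
  then show ?case by (simp add: distrib_right)
next
  case (Qx i g)
  then have "Qf N (\<lambda>x. x $ i * (g x * q x))" by (intro Qf.Qx)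
  then show ?case by (simp add: mult.assoc)
qed

lemma poly_Qf: "poly_fun N f \<Longrightarrow> Qf N f"
proof (induction rule: poly_fun.induct)
  case (pf_const c)
  then show ?case by (rule Qf.Qc)
next
  case (pf_coord i)
  then have "Qf N (\<lambda>x. x $ i * 1)" by (intro Qf.Qx Qf.Qc)
  then show ?case by simp
next
  case (pf_add f g)
  show ?case using pf_add.IH by (rule Qf.Qa)
next
  case (pf_mult f g)
  show ?case using pf_mult.IH by (rule Qf_mult)
qed

lemma Qf_NT: "Qf (m*n) g \<Longrightarrow> 0 < m \<Longrightarrow> 0 < n \<Longrightarrow> NT m n g"
proof (induction rule: Qf.induct)
  case (Qc c)
  show ?case by (rule NT_const)
next
  case (Qa f g)
  then show ?case by (intro NT_add) auto
next
  case (Qx i g)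
  have a: "i mod m < m" using Qx by simp
  have c: "i div m < n" using Qx by (simp add: less_mult_imp_div_less mult.commute)
  have "NT m n (\<lambda>x. x $ ((i div m)*m + i mod m) * g x)"
    using Qx a c by (intro NT_xmul) auto
  then show ?case by simp
qed

lemma isd_NT: "isd_fun (m*n) f \<Longrightarrow> 0 < m \<Longrightarrow> 0 < n \<Longrightarrow> NT m n f"
proof (induction rule: isd_fun.induct)
  case (isd_poly f)
  then show ?case using poly_Qf Qf_NT by blast
next
  case (isd_min f g)
  then show ?case by (intro NT_min) auto
next
  case (isd_max f g)
  then show ?case by (intro NT_max) auto
qed

definition stk :: "nat \<Rightarrow> (nat \<Rightarrow> real vec \<Rightarrow> real) \<Rightarrow> nat \<Rightarrow> real vec \<Rightarrow> real vec" where
  "stk n fs j v = vec (j*n) (\<lambda>p. if p mod n = 0 then fs (p div n) v else 0)"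

lemma stk_Suc: "0 < n \<Longrightarrow> stk n fs j v @\<^sub>v sv n 0 (fs j v) = stk n fs (Suc j) v"
proof (rule eq_vecI)
  assume n: "0 < n"
  fix p assume p: "p < dim_vec (stk n fs (Suc j) v)"
  then have p': "p < j*n + n" by (simp add: stk_def)
  show "(stk n fs j v @\<^sub>v sv n 0 (fs j v)) $ p = stk n fs (Suc j) v $ p"
  proof (cases "p < j*n")
    case True
    then show ?thesis using p' by (simp add: stk_def sv_def)
  next
    case False
    obtain q where q: "p = j*n + q" using False by (metis le_add_diff_inverse not_less)
    have qn: "q < n" using q p' by simp
    have "p mod n = q" "p div n = j" using q qn by auto
    then show ?thesis using False q qn by (simp add: stk_def sv_def)
  qed
qed (simp add: stk_def sv_def)

lemma CN_stack:
  assumes fs: "\<And>i. i < k \<Longrightarrow> NT m n (fs i)" and m: "0 < m" and n: "0 < n"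
  shows "j \<le> k \<Longrightarrow> CN m n (j*n) (\<lambda>X. stk n fs j (vec_cm m n X))"
proof (induction j)
  case 0
  have "CN m n 0 (\<lambda>X. vec 0 (\<lambda>p. 0))" by (rule CN_const) auto
  then show ?case by (simp, rule CN_cong) (auto simp: stk_def)
next
  case (Suc j)
  have a: "CN m n (j*n) (\<lambda>X. stk n fs j (vec_cm m n X))" using Suc by simp
  have b: "CN m n n (\<lambda>X. sv n 0 (fs j (vec_cm m n X)))" using fs[of j] Suc n unfolding NT_def by auto
  have "CN m n (j*n + n) (\<lambda>X. stk n fs j (vec_cm m n X) @\<^sub>v sv n 0 (fs j (vec_cm m n X)))"
    using CN_par[OF a b m n] .
  then have "CN m n (j*n + n) (\<lambda>X. stk n fs (Suc j) (vec_cm m n X))"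
    by (rule CN_cong) (simp add: stk_Suc n)
  then show ?case by (simp add: add.commute)
qed

definition selL :: "nat \<Rightarrow> nat \<Rightarrow> nat \<Rightarrow> layer" where
  "selL m n k = Layer (0\<^sub>v k) (mat k (k*n) (\<lambda>(i,p). if p = i*n then 1 else 0)) k (0\<^sub>m k (k*m))
     (0\<^sub>v k) (0\<^sub>m k (k*n)) k (0\<^sub>m k (k*m))"

lemma selL_wf: "layer_wf m n (k*n) k (selL m n k)"
  unfolding layer_wf_def selL_def by auto

lemma selL_step:
  assumes X: "X \<in> carrier_mat m n" and n: "0 < n"
  shows "layer_step X (selL m n k) (stk n fs k v) = vec k (\<lambda>i. fs i v)"
proof -
  let ?h = "stk n fs k v"
  let ?S = "mat k (k*n) (\<lambda>(i,p). if p = i*n then (1::real) else 0)"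
  have h: "?h \<in> carrier_vec (k*n)" unfolding stk_def by auto
  have z: "0\<^sub>m k (k*m) *\<^sub>v (kron_id k X *\<^sub>v ?h) = 0\<^sub>v k" using X by (intro zero_mv) simp
  have z2: "0\<^sub>m k (k*n) *\<^sub>v ?h = 0\<^sub>v k" using h by (intro zero_mv) simp
  have S: "(?S *\<^sub>v ?h) $ i = fs i v" if i: "i < k" for i
  proof -
    have ik: "i*n < k*n" using i n by simp
    have "(?S *\<^sub>v ?h) $ i = (\<Sum>p<k*n. ?S $$ (i,p) * ?h $ p)" using h i by (intro mv_index) auto
    also have "\<dots> = (\<Sum>p<k*n. (if p = i*n then 1 else 0) * ?h $ p)" using i by (intro sum.cong) auto
    also have "\<dots> = ?h $ (i*n)" using ik by (subst sum_delta_l) auto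
    also have "\<dots> = fs i v" using ik n by (simp add: stk_def)
    finally show ?thesis .
  qed
  show ?thesis
    unfolding layer_step_def selL_def layer.sel z z2
    using S by (intro eq_vecI) (auto simp: relu_vec_def)
qed

lemma unvec_carrier: "unvec_cm m n v \<in> carrier_mat m n"
  unfolding unvec_cm_def by auto

lemma vec_unvec: "v \<in> carrier_vec (m*n) \<Longrightarrow> vec_cm m n (unvec_cm m n v) = v"
proof (rule eq_vecI)
  fix p assume v: "v \<in> carrier_vec (m*n)" and p: "p < dim_vec v"
  then have p': "p < m*n" by simp
  then have m: "0 < m" by (cases "m = 0") auto
  have a: "p mod m < m" using m by simp
  have b: "p div m < n" using p' by (simp add: less_mult_imp_div_less mult.commute)
  show "vec_cm m n (unvec_cm m n v) $ p = v $ p"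
    using p' a b by (simp add: vec_cm_def unvec_cm_def)
qed (simp add: vec_cm_def)

lemma ISD_to_MRNN:
  assumes f: "f \<in> ISD (m * n) k"
  shows "\<exists>N \<in> MRNN m n k. f = restrict (N \<circ> unvec_cm m n) (carrier_vec (m * n))"
proof -
  have fe: "f \<in> extensional (carrier_vec (m*n))" and fc: "\<forall>x\<in>carrier_vec (m*n). f x \<in> carrier_vec k"
    and fi: "\<forall>i<k. \<exists>g. isd_fun (m*n) g \<and> (\<forall>x\<in>carrier_vec (m*n). f x $ i = g x)"
    using f unfolding ISD_def by auto
  show ?thesis
  proof (cases "m = 0 \<or> n = 0")
    case True
    then have mn: "m * n = 0" by auto
    let ?c = "f (0\<^sub>v 0)"
    have c: "?c \<in> carrier_vec k" using fc mn by simp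
    let ?N = "restrict (\<lambda>X. ?c) (carrier_mat m n)"
    have N: "?N \<in> MRNN m n k" by (rule MRNN_const[OF c])
    have "f = restrict (?N \<circ> unvec_cm m n) (carrier_vec (m * n))"
    proof
      fix x
      show "f x = restrict (?N \<circ> unvec_cm m n) (carrier_vec (m * n)) x"
      proof (cases "x \<in> carrier_vec (m*n)")
        case True
        then have "x = 0\<^sub>v 0" using mn by (intro eq_vecI) auto
        then show ?thesis using True unvec_carrier[of m n x] by simp
      next
        case False
        then show ?thesis using fe by (simp add: extensional_def)
      qed
    qed
    then show ?thesis using N by blast
  next
    case False
    then have m: "0 < m" and n: "0 < n" by auto
    from fi have "\<forall>i. \<exists>g. i < k \<longrightarrow> isd_fun (m*n) g \<and> (\<forall>x\<in>carrier_vec (m*n). f x $ i = g x)" by auto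
    from choice[OF this] obtain fs where fs: "\<forall>i. i < k \<longrightarrow> isd_fun (m*n) (fs i) \<and> (\<forall>x\<in>carrier_vec (m*n). f x $ i = fs i x)"
      by blast
    have NT: "NT m n (fs i)" if "i < k" for i using fs that isd_NT m n by blast
    have "CN m n (k*n) (\<lambda>X. stk n fs k (vec_cm m n X))" using CN_stack[OF NT m n] by simp
    then have "CN m n k (\<lambda>X. layer_step X (selL m n k) (stk n fs k (vec_cm m n X)))"
      by (rule CN_layer[OF _ selL_wf]) (simp_all add: selL_def)
    then have "CN m n k (\<lambda>X. vec k (\<lambda>i. fs i (vec_cm m n X)))"
      by (rule CN_cong) (simp add: selL_step n)
    then have N: "restrict (\<lambda>X. vec k (\<lambda>i. fs i (vec_cm m n X))) (carrier_mat m n) \<in> MRNN m n k"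
      by (rule CN_MRNN)
    have "f = restrict (restrict (\<lambda>X. vec k (\<lambda>i. fs i (vec_cm m n X))) (carrier_mat m n) \<circ> unvec_cm m n)
        (carrier_vec (m * n))"
    proof
      fix x
      show "f x = restrict (restrict (\<lambda>X. vec k (\<lambda>i. fs i (vec_cm m n X))) (carrier_mat m n) \<circ> unvec_cm m n)
        (carrier_vec (m * n)) x"
      proof (cases "x \<in> carrier_vec (m*n)")
        case True
        have "f x = vec k (\<lambda>i. fs i x)" using fc fs True by (intro eq_vecI) auto
        then show ?thesis using True unvec_carrier[of m n x] vec_unvec[OF True] by simp
      next
        case False
        then show ?thesis using fe by (simp add: extensional_def)
      qed
    qed
    then show ?thesis using N by blast
  qed
qed


lemma fun_ring_ring:
  assumes S: "\<And>F. F\<in>S \<Longrightarrow> F \<in> extensional D \<and> (\<forall>x\<in>D. F x \<in> carrier_vec k)"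
    and zero: "restrict (\<lambda>x. vec k (\<lambda>i. 0)) D \<in> S"
    and one: "restrict (\<lambda>x. vec k (\<lambda>i. 1)) D \<in> S"
    and add: "\<And>F G. F\<in>S \<Longrightarrow> G\<in>S \<Longrightarrow> restrict (\<lambda>x. vec k (\<lambda>i. F x $ i + G x $ i)) D \<in> S"
    and mult: "\<And>F G. F\<in>S \<Longrightarrow> G\<in>S \<Longrightarrow> restrict (\<lambda>x. vec k (\<lambda>i. F x $ i * G x $ i)) D \<in> S"
    and neg: "\<And>F. F\<in>S \<Longrightarrow> restrict (\<lambda>x. vec k (\<lambda>i. - F x $ i)) D \<in> S"
  shows "ring (fun_ring D k S)"
proof -
  have ext: "F = restrict F D" if "F \<in> S" for F using S[OF that] by (simp add: extensional_restrict)
  have dim: "dim_vec (F x) = k" if "F \<in> S" "x \<in> D" for F x using S[OF that(1)] that(2) by auto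
  show ?thesis
  proof (rule ringI)
    show "abelian_group (fun_ring D k S)"
    proof (rule abelian_groupI)
      fix x y z
      assume x: "x \<in> carrier (fun_ring D k S)" and y: "y \<in> carrier (fun_ring D k S)"
        and z: "z \<in> carrier (fun_ring D k S)"
      have xS: "x \<in> S" and yS: "y \<in> S" and zS: "z \<in> S" using x y z by (auto simp: fun_ring_def)
      show "x \<oplus>\<^bsub>fun_ring D k S\<^esub> y \<in> carrier (fun_ring D k S)"
        using add[OF xS yS] by (simp add: fun_ring_def)
      show "x \<oplus>\<^bsub>fun_ring D k S\<^esub> y \<oplus>\<^bsub>fun_ring D k S\<^esub> z =
          x \<oplus>\<^bsub>fun_ring D k S\<^esub> (y \<oplus>\<^bsub>fun_ring D k S\<^esub> z)"
        by (simp add: fun_ring_def, intro restrict_ext eq_vecI) (auto simp: add.assoc)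
      show "x \<oplus>\<^bsub>fun_ring D k S\<^esub> y = y \<oplus>\<^bsub>fun_ring D k S\<^esub> x"
        by (simp add: fun_ring_def, intro restrict_ext eq_vecI) (auto simp: add.commute)
      show "\<zero>\<^bsub>fun_ring D k S\<^esub> \<oplus>\<^bsub>fun_ring D k S\<^esub> x = x"
        apply (simp add: fun_ring_def)
        apply (subst (2) ext[OF xS])
        apply (intro restrict_ext eq_vecI)
        using dim[OF xS] by auto
      show "\<exists>y\<in>carrier (fun_ring D k S). y \<oplus>\<^bsub>fun_ring D k S\<^esub> x = \<zero>\<^bsub>fun_ring D k S\<^esub>"
        apply (rule bexI[of _ "restrict (\<lambda>v. vec k (\<lambda>i. - x v $ i)) D"])
        using neg[OF xS] apply (simp_all add: fun_ring_def)
        apply (intro restrict_ext eq_vecI) by auto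
    next
      show "\<zero>\<^bsub>fun_ring D k S\<^esub> \<in> carrier (fun_ring D k S)" using zero by (simp add: fun_ring_def)
    qed
    show "monoid (fun_ring D k S)"
    proof (rule monoidI)
      fix x y z
      assume x: "x \<in> carrier (fun_ring D k S)" and y: "y \<in> carrier (fun_ring D k S)"
        and z: "z \<in> carrier (fun_ring D k S)"
      have xS: "x \<in> S" and yS: "y \<in> S" and zS: "z \<in> S" using x y z by (auto simp: fun_ring_def)
      show "x \<otimes>\<^bsub>fun_ring D k S\<^esub> y \<in> carrier (fun_ring D k S)"
        using mult[OF xS yS] by (simp add: fun_ring_def)
      show "x \<otimes>\<^bsub>fun_ring D k S\<^esub> y \<otimes>\<^bsub>fun_ring D k S\<^esub> z =
          x \<otimes>\<^bsub>fun_ring D k S\<^esub> (y \<otimes>\<^bsub>fun_ring D k S\<^esub> z)"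
        by (simp add: fun_ring_def, intro restrict_ext eq_vecI) (auto simp: mult.assoc)
      show "\<one>\<^bsub>fun_ring D k S\<^esub> \<otimes>\<^bsub>fun_ring D k S\<^esub> x = x"
        apply (simp add: fun_ring_def)
        apply (subst (2) ext[OF xS])
        apply (intro restrict_ext eq_vecI)
        using dim[OF xS] by auto
      show "x \<otimes>\<^bsub>fun_ring D k S\<^esub> \<one>\<^bsub>fun_ring D k S\<^esub> = x"
        apply (simp add: fun_ring_def)
        apply (subst (2) ext[OF xS])
        apply (intro restrict_ext eq_vecI)
        using dim[OF xS] by auto
    next
      show "\<one>\<^bsub>fun_ring D k S\<^esub> \<in> carrier (fun_ring D k S)" using one by (simp add: fun_ring_def)
    qed
    fix x y z
    assume x: "x \<in> carrier (fun_ring D k S)" and y: "y \<in> carrier (fun_ring D k S)"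
      and z: "z \<in> carrier (fun_ring D k S)"
    show "(x \<oplus>\<^bsub>fun_ring D k S\<^esub> y) \<otimes>\<^bsub>fun_ring D k S\<^esub> z =
        x \<otimes>\<^bsub>fun_ring D k S\<^esub> z \<oplus>\<^bsub>fun_ring D k S\<^esub> y \<otimes>\<^bsub>fun_ring D k S\<^esub> z"
      by (simp add: fun_ring_def, intro restrict_ext eq_vecI) (auto simp: distrib_right)
    show "z \<otimes>\<^bsub>fun_ring D k S\<^esub> (x \<oplus>\<^bsub>fun_ring D k S\<^esub> y) =
        z \<otimes>\<^bsub>fun_ring D k S\<^esub> x \<oplus>\<^bsub>fun_ring D k S\<^esub> z \<otimes>\<^bsub>fun_ring D k S\<^esub> y"
      by (simp add: fun_ring_def, intro restrict_ext eq_vecI) (auto simp: distrib_left)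
  qed
qed


definition Phi :: "nat \<Rightarrow> nat \<Rightarrow> (real mat \<Rightarrow> real vec) \<Rightarrow> (real vec \<Rightarrow> real vec)" where
  "Phi m n N = restrict (N \<circ> unvec_cm m n) (carrier_vec (m * n))"

definition Psi :: "nat \<Rightarrow> nat \<Rightarrow> (real vec \<Rightarrow> real vec) \<Rightarrow> (real mat \<Rightarrow> real vec)" where
  "Psi m n f = restrict (f \<circ> vec_cm m n) (carrier_mat m n)"

lemma vec_cm_carrier: "vec_cm m n X \<in> carrier_vec (m*n)"
  unfolding vec_cm_def by auto

lemma unvec_vec: "X \<in> carrier_mat m n \<Longrightarrow> unvec_cm m n (vec_cm m n X) = X"
proof (rule eq_matI)
  fix i j assume X: "X \<in> carrier_mat m n" and i: "i < dim_row X" and j: "j < dim_col X"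
  then have i': "i < m" and j': "j < n" by auto
  have "j*m + i < m*n" using idx_bound[OF i' j'] .
  then show "unvec_cm m n (vec_cm m n X) $$ (i, j) = X $$ (i, j)"
    using i' j' vec_cm_index[OF i' j', of X] by (simp add: unvec_cm_def)
qed (auto simp: unvec_cm_def)

lemma MRNN_ext: "N \<in> MRNN m n k \<Longrightarrow> N \<in> extensional (carrier_mat m n)"
  unfolding MRNN_def by auto

lemma PsiPhi: "N \<in> MRNN m n k \<Longrightarrow> Psi m n (Phi m n N) = N"
proof -
  assume N: "N \<in> MRNN m n k"
  have "Psi m n (Phi m n N) = restrict N (carrier_mat m n)"
    unfolding Psi_def Phi_def
    by (intro restrict_ext) (simp add: vec_cm_carrier unvec_vec)
  also have "\<dots> = N" using MRNN_ext[OF N] by (simp add: extensional_restrict)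
  finally show ?thesis .
qed

lemma PhiPsi: "f \<in> ISD (m*n) k \<Longrightarrow> Phi m n (Psi m n f) = f"
proof -
  assume f: "f \<in> ISD (m*n) k"
  have "Phi m n (Psi m n f) = restrict f (carrier_vec (m*n))"
    unfolding Psi_def Phi_def
    by (intro restrict_ext) (simp add: unvec_carrier vec_unvec)
  also have "\<dots> = f" using f unfolding ISD_def by (simp add: extensional_restrict)
  finally show ?thesis .
qed

lemma Psi_ISD: "f \<in> ISD (m*n) k \<Longrightarrow> Psi m n f \<in> MRNN m n k"
proof -
  assume f: "f \<in> ISD (m*n) k"
  obtain N where N: "N \<in> MRNN m n k" and fN: "f = Phi m n N"
    using ISD_to_MRNN[OF f] unfolding Phi_def by blast
  show ?thesis using PsiPhi[OF N] fN N by simp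
qed

lemma MRNN_Psi: "N \<in> MRNN m n k \<Longrightarrow> \<exists>f\<in>ISD (m*n) k. N = Psi m n f"
  using MRNN_to_ISD unfolding Psi_def by blast

lemma ISD_op2:
  assumes F: "F \<in> ISD N k" and G: "G \<in> ISD N k"
    and h: "\<And>f g. isd_fun N f \<Longrightarrow> isd_fun N g \<Longrightarrow> isd_fun N (\<lambda>x. h (f x) (g x))"
  shows "restrict (\<lambda>x. vec k (\<lambda>i. h (F x $ i) (G x $ i))) (carrier_vec N) \<in> ISD N k"
  unfolding ISD_def
proof (intro CollectI conjI allI impI ballI)
  fix i assume i: "i < k"
  obtain f where f: "isd_fun N f" "\<forall>x\<in>carrier_vec N. F x $ i = f x" using F i unfolding ISD_def by blast
  obtain g where g: "isd_fun N g" "\<forall>x\<in>carrier_vec N. G x $ i = g x" using G i unfolding ISD_def by blast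
  show "\<exists>f. isd_fun N f \<and> (\<forall>x\<in>carrier_vec N. restrict (\<lambda>x. vec k (\<lambda>i. h (F x $ i) (G x $ i))) (carrier_vec N) x $ i = f x)"
    using h[OF f(1) g(1)] f(2) g(2) i by (intro exI[of _ "\<lambda>x. h (f x) (g x)"]) auto
qed auto

lemma ISD_constv: "restrict (\<lambda>x. vec k (\<lambda>i. c)) (carrier_vec N) \<in> ISD N k"
  unfolding ISD_def using isd_const by auto

lemma ISD_ring_ring: "ring (ISD_ring N k)"
  unfolding ISD_ring_def
proof (rule fun_ring_ring)
  fix F G assume F: "F \<in> ISD N k" and G: "G \<in> ISD N k"
  show "restrict (\<lambda>x. vec k (\<lambda>i. F x $ i + G x $ i)) (carrier_vec N) \<in> ISD N k"
    using F G isd_add by (rule ISD_op2)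
  show "restrict (\<lambda>x. vec k (\<lambda>i. F x $ i * G x $ i)) (carrier_vec N) \<in> ISD N k"
    using F G isd_mult by (rule ISD_op2)
next
  fix F assume F: "F \<in> ISD N k"
  have "restrict (\<lambda>x. vec k (\<lambda>i. (\<lambda>a b. - a) (F x $ i) (F x $ i))) (carrier_vec N) \<in> ISD N k"
    using F F by (rule ISD_op2) (rule isd_neg)
  then show "restrict (\<lambda>x. vec k (\<lambda>i. - F x $ i)) (carrier_vec N) \<in> ISD N k" by simp
  show "F \<in> extensional (carrier_vec N) \<and> (\<forall>x\<in>carrier_vec N. F x \<in> carrier_vec k)"
    using F unfolding ISD_def by auto
qed (rule ISD_constv)+

lemma Psi_op2:
  "Psi m n (restrict (\<lambda>x. vec k (\<lambda>i. h (F x $ i) (G x $ i))) (carrier_vec (m*n))) =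
   restrict (\<lambda>X. vec k (\<lambda>i. h (Psi m n F X $ i) (Psi m n G X $ i))) (carrier_mat m n)"
  unfolding Psi_def by (intro restrict_ext) (simp add: vec_cm_carrier)

lemma Phi_op2:
  "Phi m n (restrict (\<lambda>X. vec k (\<lambda>i. h (F X $ i) (G X $ i))) (carrier_mat m n)) =
   restrict (\<lambda>x. vec k (\<lambda>i. h (Phi m n F x $ i) (Phi m n G x $ i))) (carrier_vec (m*n))"
  unfolding Phi_def by (intro restrict_ext) (simp add: unvec_carrier)

lemma Psi_const: "Psi m n (restrict (\<lambda>x. c) (carrier_vec (m*n))) = restrict (\<lambda>X. c) (carrier_mat m n)"
  unfolding Psi_def by (intro restrict_ext) (simp add: vec_cm_carrier)

lemma Phi_const: "Phi m n (restrict (\<lambda>X. c) (carrier_mat m n)) = restrict (\<lambda>x. c) (carrier_vec (m*n))"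
  unfolding Phi_def by (intro restrict_ext) (simp add: unvec_carrier)

lemma MRNN_op2:
  assumes N1: "N1 \<in> MRNN m n k" and N2: "N2 \<in> MRNN m n k"
    and h: "\<And>f g. isd_fun (m*n) f \<Longrightarrow> isd_fun (m*n) g \<Longrightarrow> isd_fun (m*n) (\<lambda>x. h (f x) (g x))"
  shows "restrict (\<lambda>X. vec k (\<lambda>i. h (N1 X $ i) (N2 X $ i))) (carrier_mat m n) \<in> MRNN m n k"
proof -
  obtain f1 where f1: "f1 \<in> ISD (m*n) k" "N1 = Psi m n f1" using MRNN_Psi[OF N1] by blast
  obtain f2 where f2: "f2 \<in> ISD (m*n) k" "N2 = Psi m n f2" using MRNN_Psi[OF N2] by blast
  have "Psi m n (restrict (\<lambda>x. vec k (\<lambda>i. h (f1 x $ i) (f2 x $ i))) (carrier_vec (m*n))) \<in> MRNN m n k"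
    using ISD_op2[OF f1(1) f2(1) h] by (rule Psi_ISD)
  then show ?thesis unfolding Psi_op2 f1(2) f2(2) .
qed

lemma MRNN_ring_ring: "ring (MRNN_ring m n k)"
  unfolding MRNN_ring_def
proof (rule fun_ring_ring)
  fix F G assume F: "F \<in> MRNN m n k" and G: "G \<in> MRNN m n k"
  show "restrict (\<lambda>x. vec k (\<lambda>i. F x $ i + G x $ i)) (carrier_mat m n) \<in> MRNN m n k"
    using F G isd_add by (rule MRNN_op2)
  show "restrict (\<lambda>x. vec k (\<lambda>i. F x $ i * G x $ i)) (carrier_mat m n) \<in> MRNN m n k"
    using F G isd_mult by (rule MRNN_op2)
next
  fix F assume F: "F \<in> MRNN m n k"
  have "restrict (\<lambda>x. vec k (\<lambda>i. (\<lambda>a b. - a) (F x $ i) (F x $ i))) (carrier_mat m n) \<in> MRNN m n k"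
    using F F by (rule MRNN_op2) (rule isd_neg)
  then show "restrict (\<lambda>x. vec k (\<lambda>i. - F x $ i)) (carrier_mat m n) \<in> MRNN m n k" by simp
  obtain f where f: "f \<in> ISD (m*n) k" "F = Psi m n f" using MRNN_Psi[OF F] by blast
  show "F \<in> extensional (carrier_mat m n) \<and> (\<forall>x\<in>carrier_mat m n. F x \<in> carrier_vec k)"
    using f vec_cm_carrier unfolding ISD_def Psi_def by auto
qed (rule MRNN_const, simp)+

lemma Phi_iso: "Phi m n \<in> ring_iso (MRNN_ring m n k) (ISD_ring (m * n) k)"
  unfolding ring_iso_def
proof (intro CollectI conjI)
  have cR: "carrier (MRNN_ring m n k) = MRNN m n k" and cS: "carrier (ISD_ring (m*n) k) = ISD (m*n) k"
    unfolding MRNN_ring_def ISD_ring_def fun_ring_def by simp_all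
  have PhiI: "Phi m n N \<in> ISD (m*n) k" if N: "N \<in> MRNN m n k" for N
  proof -
    obtain f where f: "f \<in> ISD (m*n) k" "N = Psi m n f" using MRNN_Psi[OF N] by blast
    then show ?thesis using PhiPsi by simp
  qed
  show "Phi m n \<in> ring_hom (MRNN_ring m n k) (ISD_ring (m * n) k)"
    unfolding ring_hom_def
  proof (intro CollectI conjI allI impI)
    show "Phi m n \<in> carrier (MRNN_ring m n k) \<rightarrow> carrier (ISD_ring (m * n) k)"
      unfolding cR cS using PhiI by auto
  next
    fix x y
    show "Phi m n (x \<otimes>\<^bsub>MRNN_ring m n k\<^esub> y) = Phi m n x \<otimes>\<^bsub>ISD_ring (m * n) k\<^esub> Phi m n y"
      unfolding MRNN_ring_def ISD_ring_def fun_ring_def by (simp add: Phi_op2)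
    show "Phi m n (x \<oplus>\<^bsub>MRNN_ring m n k\<^esub> y) = Phi m n x \<oplus>\<^bsub>ISD_ring (m * n) k\<^esub> Phi m n y"
      unfolding MRNN_ring_def ISD_ring_def fun_ring_def by (simp add: Phi_op2)
  next
    show "Phi m n \<one>\<^bsub>MRNN_ring m n k\<^esub> = \<one>\<^bsub>ISD_ring (m * n) k\<^esub>"
      unfolding MRNN_ring_def ISD_ring_def fun_ring_def by (simp add: Phi_const)
  qed
  show "bij_betw (Phi m n) (carrier (MRNN_ring m n k)) (carrier (ISD_ring (m * n) k))"
    unfolding cR cS bij_betw_def
  proof
    show "inj_on (Phi m n) (MRNN m n k)"
      by (rule inj_onI) (metis PsiPhi)
    show "Phi m n ` MRNN m n k = ISD (m * n) k"
    proof
      show "Phi m n ` MRNN m n k \<subseteq> ISD (m * n) k" using PhiI by auto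
      show "ISD (m * n) k \<subseteq> Phi m n ` MRNN m n k"
      proof
        fix f assume f: "f \<in> ISD (m*n) k"
        then have "Phi m n (Psi m n f) = f" by (rule PhiPsi)
        then show "f \<in> Phi m n ` MRNN m n k" using Psi_ISD[OF f] by force
      qed
    qed
  qed
qed

theorem mainTheorem8:
  fixes m n k :: nat
  shows "(\<forall>f \<in> ISD (m * n) k. \<exists>N \<in> MRNN m n k.
            f = restrict (N \<circ> unvec_cm m n) (carrier_vec (m * n)))
       \<and> (\<forall>N \<in> MRNN m n k. \<exists>f \<in> ISD (m * n) k.
            N = restrict (f \<circ> vec_cm m n) (carrier_mat m n))
       \<and> ring (MRNN_ring m n k) \<and> ring (ISD_ring (m * n) k)
       \<and> (\<lambda>N. restrict (N \<circ> unvec_cm m n) (carrier_vec (m * n)))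
            \<in> ring_iso (MRNN_ring m n k) (ISD_ring (m * n) k)"
proof (intro conjI ballI)
  fix f assume "f \<in> ISD (m * n) k"
  then show "\<exists>N \<in> MRNN m n k. f = restrict (N \<circ> unvec_cm m n) (carrier_vec (m * n))"
    by (rule ISD_to_MRNN)
next
  fix N assume "N \<in> MRNN m n k"
  then show "\<exists>f \<in> ISD (m * n) k. N = restrict (f \<circ> vec_cm m n) (carrier_mat m n)"
    by (rule MRNN_to_ISD)
next
  show "ring (MRNN_ring m n k)" by (rule MRNN_ring_ring)
  show "ring (ISD_ring (m * n) k)" by (rule ISD_ring_ring)
  have "(\<lambda>N. restrict (N \<circ> unvec_cm m n) (carrier_vec (m * n))) = Phi m n"
    by (rule ext) (simp add: Phi_def)
  then show "(\<lambda>N. restrict (N \<circ> unvec_cm m n) (carrier_vec (m * n)))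
            \<in> ring_iso (MRNN_ring m n k) (ISD_ring (m * n) k)"
    using Phi_iso by simp
qed

end
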